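(* Let $N=2n+1$ and $1\le k\le n$. The map $R:\mathcal F(2k-1,N)\to\mathcal F(2k+1,N)$ is surjective, and for every $\tau\in\mathcal F(2k+1,N)$, $$\big|\{\tilde\tau\in\mathcal F(2k-1,N): R(\tilde\tau)=\tau\}\big|=(n+k+1)\,k\,(2k-1).$$
   Context: Graphs are finite and undirected. A binary tree is either a single vertex (its root) or a tree in which exactly one vertex, the root, has degree $2$ and every other vertex has degree $3$ or $1$ (leaves). The height of a vertex is its graph distance to the root; a non-leaf vertex $v$ has exactly two neighbours of larger height (its children), and the two edges from $v$ to its children are its outgoing edges. A binary forest on $V=\{1,\dots,N\}$ is a graph on $V$ whose connected components are binary trees; internal vertices are the non-leaves of the components of size $\ge3$ (vertices of degree $>1$). A binary forest with $m$ components has $(N-m)/2$ internal vertices. A labeling is a bijection from the set of internal vertices to $\{1,\dots,(N-m)/2\}$; $\mathcal F(m,N)$ is the set of binary forests on $V$ with $m$ components together with a labeling. The map $R$ sends $\tau\in\mathcal F(2k-1,N)$ to the labeled forest obtained by selecting the internal vertex with the highest label, deleting both its outgoing edges and removing its label. *)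

theory Defs
  imports Main
begin

definition verts :: "nat \<Rightarrow> nat set" where
  "verts N = {1..N}"

definition is_graph :: "nat \<Rightarrow> nat set set \<Rightarrow> bool" where
  "is_graph N E \<longleftrightarrow> E \<subseteq> {{u, v} | u v. u \<in> verts N \<and> v \<in> verts N \<and> u \<noteq> v}"

definition adj :: "nat set set \<Rightarrow> (nat \<times> nat) set" where
  "adj E = {(u, v). {u, v} \<in> E \<and> u \<noteq> v}"

definition deg :: "nat set set \<Rightarrow> nat \<Rightarrow> nat" where
  "deg E v = card {e \<in> E. v \<in> e}"

definition comp :: "nat \<Rightarrow> nat set set \<Rightarrow> nat \<Rightarrow> nat set" where
  "comp N E u = {w \<in> verts N. (u, w) \<in> (adj E)\<^sup>*}"

definition components :: "nat \<Rightarrow> nat set set \<Rightarrow> nat set set" where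
  "components N E = comp N E ` verts N"

definition tree_comp :: "nat set set \<Rightarrow> nat set \<Rightarrow> bool" where
  "tree_comp E C \<longleftrightarrow> card {e \<in> E. e \<subseteq> C} = card C - 1"

definition binary_tree_comp :: "nat set set \<Rightarrow> nat set \<Rightarrow> bool" where
  "binary_tree_comp E C \<longleftrightarrow> tree_comp E C \<and>
     (card C = 1 \<or>
      ((\<exists>!r. r \<in> C \<and> deg E r = 2) \<and>
       (\<forall>u \<in> C. deg E u \<noteq> 2 \<longrightarrow> deg E u = 3 \<or> deg E u = 1)))"

definition binary_forest :: "nat \<Rightarrow> nat \<Rightarrow> nat set set \<Rightarrow> bool" where
  "binary_forest N m E \<longleftrightarrow> is_graph N E \<and>
     (\<forall>C \<in> components N E. binary_tree_comp E C) \<and> card (components N E) = m"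

definition internal :: "nat \<Rightarrow> nat set set \<Rightarrow> nat set" where
  "internal N E = {v \<in> verts N. 1 < deg E v}"

text \<open>Labeled binary forests F(m,N): the labeling is a bijection from the internal vertices
  onto {1..(N-m)/2}, extended by 0 outside the internal vertices (so that equality of
  labeled forests is equality of pairs).\<close>
definition labeled_forests :: "nat \<Rightarrow> nat \<Rightarrow> (nat set set \<times> (nat \<Rightarrow> nat)) set" where
  "labeled_forests m N = {(E, lab). binary_forest N m E \<and>
      bij_betw lab (internal N E) {1..(N - m) div 2} \<and>
      (\<forall>v. v \<notin> internal N E \<longrightarrow> lab v = 0)}"

definition root_of :: "nat \<Rightarrow> nat set set \<Rightarrow> nat \<Rightarrow> nat" where
  "root_of N E v = (THE r. r \<in> comp N E v \<and> deg E r = 2)"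

definition height :: "nat \<Rightarrow> nat set set \<Rightarrow> nat \<Rightarrow> nat" where
  "height N E v = (LEAST d. (root_of N E v, v) \<in> (adj E) ^^ d)"

definition children :: "nat \<Rightarrow> nat set set \<Rightarrow> nat \<Rightarrow> nat set" where
  "children N E v = {w. (v, w) \<in> adj E \<and> height N E v < height N E w}"

definition top_vertex :: "nat \<Rightarrow> nat set set \<Rightarrow> (nat \<Rightarrow> nat) \<Rightarrow> nat" where
  "top_vertex N E lab = (THE v. v \<in> internal N E \<and> (\<forall>u \<in> internal N E. lab u \<le> lab v))"

definition R_map :: "nat \<Rightarrow> nat set set \<times> (nat \<Rightarrow> nat) \<Rightarrow> nat set set \<times> (nat \<Rightarrow> nat)" where
  "R_map N \<tau> = (let E = fst \<tau>; lab = snd \<tau>; v = top_vertex N E lab in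
      (E - {{v, w} | w. w \<in> children N E v}, lab(v := 0)))"

end

theory Submission
  imports Defs
begin

lemma verts_finite[simp]: "finite (verts N)" by (simp add: verts_def)

lemma is_graphD: "is_graph N E \<Longrightarrow> e \<in> E \<Longrightarrow> \<exists>u v. e = {u,v} \<and> u \<in> verts N \<and> v \<in> verts N \<and> u \<noteq> v"
  unfolding is_graph_def by blast

lemma is_graph_sub: "is_graph N E \<Longrightarrow> E \<subseteq> Pow (verts N)"
  unfolding is_graph_def by blast

lemma is_graph_finite: "is_graph N E \<Longrightarrow> finite E"
  using is_graph_sub[of N E] finite_subset[of E "Pow (verts N)"] by simp

lemma is_graph_mono: "is_graph N E \<Longrightarrow> F \<subseteq> E \<Longrightarrow> is_graph N F"
  unfolding is_graph_def by blast

lemma adj_iff: "(u,v) \<in> adj E \<longleftrightarrow> {u,v} \<in> E \<and> u \<noteq> v" by (simp add: adj_def)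

lemma adj_sym: "(u,v) \<in> adj E \<Longrightarrow> (v,u) \<in> adj E" by (auto simp: adj_def insert_commute)

lemma sym_adj: "sym (adj E)" by (meson adj_sym symI)

lemma adj_verts: "is_graph N E \<Longrightarrow> (u,v) \<in> adj E \<Longrightarrow> u \<in> verts N \<and> v \<in> verts N"
  unfolding adj_def is_graph_def by (auto simp: doubleton_eq_iff)

lemma adj_edge_ne: "is_graph N E \<Longrightarrow> {u,v} \<in> E \<Longrightarrow> u \<noteq> v"
  unfolding is_graph_def by (auto simp: doubleton_eq_iff)

lemma adj_iff_g: "is_graph N E \<Longrightarrow> (u,v) \<in> adj E \<longleftrightarrow> {u,v} \<in> E"
  using adj_edge_ne adj_iff by blast

lemma reach_sym: "(u,w) \<in> (adj E)\<^sup>* \<Longrightarrow> (w,u) \<in> (adj E)\<^sup>*"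
  using sym_adj sym_rtrancl by (metis symD)

lemma reach_verts: assumes "is_graph N E" "(u,w) \<in> (adj E)\<^sup>*" "u \<in> verts N" shows "w \<in> verts N"
  using assms(2,3) by (induction rule: rtrancl_induct) (auto dest: adj_verts[OF assms(1)])

lemma comp_sub: "comp N E u \<subseteq> verts N" unfolding comp_def by auto

lemma comp_self: "u \<in> verts N \<Longrightarrow> u \<in> comp N E u" unfolding comp_def by auto

lemma comp_mem_iff: "w \<in> comp N E u \<longleftrightarrow> w \<in> verts N \<and> (u,w) \<in> (adj E)\<^sup>*"
  unfolding comp_def by auto

lemma comp_eq: "is_graph N E \<Longrightarrow> w \<in> comp N E u \<Longrightarrow> comp N E w = comp N E u"
proof -
  assume "w \<in> comp N E u"
  then have uw: "(u,w) \<in> (adj E)\<^sup>*" by (simp add: comp_mem_iff)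
  then have wu: "(w,u) \<in> (adj E)\<^sup>*" by (rule reach_sym)
  show ?thesis
  proof (rule set_eqI)
    fix x
    show "x \<in> comp N E w \<longleftrightarrow> x \<in> comp N E u"
      unfolding comp_mem_iff using uw wu rtrancl_trans[of u w "adj E" x] rtrancl_trans[of w u "adj E" x] by blast
  qed
qed

lemma comp_eq_iff: "is_graph N E \<Longrightarrow> u \<in> verts N \<Longrightarrow> w \<in> verts N \<Longrightarrow> comp N E w = comp N E u \<longleftrightarrow> w \<in> comp N E u"
proof
  assume g: "is_graph N E" and u: "u \<in> verts N" and w: "w \<in> verts N"
  { assume "comp N E w = comp N E u"
    then show "w \<in> comp N E u" using comp_self[OF w, of E] by simp }
  { assume "w \<in> comp N E u" then show "comp N E w = comp N E u" using comp_eq[OF g] by blast }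
qed

lemma comp_disj: "is_graph N E \<Longrightarrow> comp N E u \<noteq> comp N E w \<Longrightarrow> comp N E u \<inter> comp N E w = {}"
proof (rule ccontr)
  assume g: "is_graph N E" and ne: "comp N E u \<noteq> comp N E w" and "comp N E u \<inter> comp N E w \<noteq> {}"
  then obtain x where x1: "x \<in> comp N E u" and x2: "x \<in> comp N E w" by blast
  have "comp N E x = comp N E u" "comp N E x = comp N E w" using comp_eq[OF g x1] comp_eq[OF g x2] by auto
  with ne show False by simp
qed

lemma comp_in_components: "u \<in> verts N \<Longrightarrow> comp N E u \<in> components N E"
  unfolding components_def by auto

lemma components_finite[simp]: "finite (components N E)" unfolding components_def by auto

lemma components_nonempty: "C \<in> components N E \<Longrightarrow> C \<noteq> {}"
  unfolding components_def using comp_self by (metis empty_iff imageE)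

lemma components_sub: "C \<in> components N E \<Longrightarrow> C \<subseteq> verts N"
  unfolding components_def using comp_sub by (metis imageE)

lemma components_comp: "is_graph N E \<Longrightarrow> C \<in> components N E \<Longrightarrow> x \<in> C \<Longrightarrow> comp N E x = C"
  unfolding components_def using comp_eq by (metis imageE)

lemma components_disj: "is_graph N E \<Longrightarrow> C \<in> components N E \<Longrightarrow> D \<in> components N E \<Longrightarrow> x \<in> C \<Longrightarrow> x \<in> D \<Longrightarrow> C = D"
  using components_comp by metis

lemma Union_components: "\<Union> (components N E) = verts N"
proof
  show "\<Union> (components N E) \<subseteq> verts N" using components_sub by blast
  show "verts N \<subseteq> \<Union> (components N E)"
  proof
    fix x assume "x \<in> verts N"
    then show "x \<in> \<Union> (components N E)" using comp_self[of x N E] comp_in_components[of x N E] by blast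
  qed
qed

lemma edge_in_comp: "is_graph N E \<Longrightarrow> {x,y} \<in> E \<Longrightarrow> y \<in> comp N E x"
proof -
  assume g: "is_graph N E" and e: "{x,y} \<in> E"
  then have "(x,y) \<in> adj E" using adj_iff_g by blast
  then show ?thesis using adj_verts[OF g] unfolding comp_def by auto
qed

lemma edge_sub_comp: "is_graph N E \<Longrightarrow> e \<in> E \<Longrightarrow> x \<in> e \<Longrightarrow> e \<subseteq> comp N E x"
proof -
  assume g: "is_graph N E" and e: "e \<in> E" and x: "x \<in> e"
  obtain p q where pq: "e = {p,q}" "p \<in> verts N" "q \<in> verts N" using is_graphD[OF g e] by blast
  show ?thesis
  proof (cases "x = p")
    case True
    then show ?thesis using pq e edge_in_comp[OF g, of p q] comp_self[of p] by auto
  next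
    case False
    then have "x = q" using x pq by auto
    then show ?thesis using pq e edge_in_comp[OF g, of q p] comp_self[of q] by (auto simp: insert_commute)
  qed
qed


lemma adj_insert: "x \<noteq> y \<Longrightarrow> adj (insert {x,y} E) = adj E \<union> {(x,y),(y,x)}"
  unfolding adj_def by (auto simp: doubleton_eq_iff)

lemma add_edge_reach:
  assumes xy: "x \<noteq> y"
  shows "(u,w) \<in> (adj (insert {x,y} E))\<^sup>* \<longleftrightarrow>
     (u,w) \<in> (adj E)\<^sup>* \<or> ((u,x) \<in> (adj E)\<^sup>* \<and> (y,w) \<in> (adj E)\<^sup>*) \<or> ((u,y) \<in> (adj E)\<^sup>* \<and> (x,w) \<in> (adj E)\<^sup>*)"
    (is "?L \<longleftrightarrow> ?R")
proof
  let ?A = "adj E" and ?B = "adj (insert {x,y} E)"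
  have AB: "?A \<subseteq> ?B" and xyB: "(x,y) \<in> ?B" and yxB: "(y,x) \<in> ?B" using adj_insert[OF xy, of E] by auto
  have mono: "\<And>a b. (a,b) \<in> ?A\<^sup>* \<Longrightarrow> (a,b) \<in> ?B\<^sup>*" using rtrancl_mono[OF AB] by blast
  assume ?R
  then show ?L
  proof (elim disjE conjE)
    assume "(u,w) \<in> ?A\<^sup>*" then show ?thesis by (rule mono)
  next
    assume a: "(u,x) \<in> ?A\<^sup>*" "(y,w) \<in> ?A\<^sup>*"
    have "(u,y) \<in> ?B\<^sup>*" using rtrancl_into_rtrancl[OF mono[OF a(1)] xyB] .
    then show ?thesis using mono[OF a(2)] rtrancl_trans by metis
  next
    assume a: "(u,y) \<in> ?A\<^sup>*" "(x,w) \<in> ?A\<^sup>*"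
    have "(u,x) \<in> ?B\<^sup>*" using rtrancl_into_rtrancl[OF mono[OF a(1)] yxB] .
    then show ?thesis using mono[OF a(2)] rtrancl_trans by metis
  qed
next
  let ?A = "adj E" and ?B = "adj (insert {x,y} E)"
  assume ?L
  then show ?R
  proof (induction w rule: rtrancl_induct)
    case base
    then show ?case by simp
  next
    case (step w w')
    have st: "(w,w') \<in> ?A \<or> (w = x \<and> w' = y) \<or> (w = y \<and> w' = x)"
      using step.hyps(2) adj_insert[OF xy, of E] by auto
    show ?case
    proof (cases "(w,w') \<in> ?A")
      case True
      then show ?thesis using step.IH rtrancl_into_rtrancl[of _ _ ?A w'] by blast
    next
      case False
      then have c: "(w = x \<and> w' = y) \<or> (w = y \<and> w' = x)" using st by blast
      have yx: "(y,y) \<in> ?A\<^sup>*" "(x,x) \<in> ?A\<^sup>*" by auto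
      from step.IH show ?thesis
      proof (elim disjE conjE)
        assume "(u,w) \<in> ?A\<^sup>*"
        then show ?thesis using c yx by blast
      next
        assume a: "(u,x) \<in> ?A\<^sup>*" "(y,w) \<in> ?A\<^sup>*"
        show ?thesis using c
        proof (elim disjE conjE)
          assume "w = x" "w' = y" then show ?thesis using a yx by blast
        next
          assume "w = y" "w' = x" then show ?thesis using a by blast
        qed
      next
        assume a: "(u,y) \<in> ?A\<^sup>*" "(x,w) \<in> ?A\<^sup>*"
        show ?thesis using c
        proof (elim disjE conjE)
          assume "w = x" "w' = y" then show ?thesis using a by blast
        next
          assume "w = y" "w' = x" then show ?thesis using a yx by blast
        qed
      qed
    qed
  qed
qed

lemma is_graph_insert: "is_graph N E \<Longrightarrow> x \<in> verts N \<Longrightarrow> y \<in> verts N \<Longrightarrow> x \<noteq> y \<Longrightarrow> is_graph N (insert {x,y} E)"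
  unfolding is_graph_def by blast

lemma comp_insert:
  assumes g: "is_graph N E" and x: "x \<in> verts N" and y: "y \<in> verts N" and xy: "x \<noteq> y"
  shows "comp N (insert {x,y} E) u =
    (if u \<in> comp N E x \<union> comp N E y then comp N E x \<union> comp N E y else comp N E u)"
proof -
  have r: "\<And>a b. (a,b) \<in> (adj E)\<^sup>* \<longleftrightarrow> b \<in> comp N E a \<or> (a \<notin> verts N \<and> a = b)"
  proof -
    fix a b
    show "(a,b) \<in> (adj E)\<^sup>* \<longleftrightarrow> b \<in> comp N E a \<or> (a \<notin> verts N \<and> a = b)"
    proof
      assume ab: "(a,b) \<in> (adj E)\<^sup>*"
      show "b \<in> comp N E a \<or> (a \<notin> verts N \<and> a = b)"
      proof (cases "a \<in> verts N")
        case True then show ?thesis using reach_verts[OF g ab] ab by (simp add: comp_mem_iff)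
      next
        case False
        from ab have "a = b \<or> (\<exists>z. (a,z) \<in> adj E)" by (metis converse_rtranclE)
        then show ?thesis using False adj_verts[OF g] by blast
      qed
    next
      assume "b \<in> comp N E a \<or> (a \<notin> verts N \<and> a = b)"
      then show "(a,b) \<in> (adj E)\<^sup>*" by (auto simp: comp_mem_iff)
    qed
  qed
  have cx: "comp N E x = comp N E x" by simp
  show ?thesis
  proof (rule set_eqI)
    fix w
    have "w \<in> comp N (insert {x,y} E) u \<longleftrightarrow> w \<in> verts N \<and> (u,w) \<in> (adj (insert {x,y} E))\<^sup>*"
      by (simp add: comp_mem_iff)
    also have "\<dots> \<longleftrightarrow> w \<in> verts N \<and> ((u,w) \<in> (adj E)\<^sup>* \<or> ((u,x) \<in> (adj E)\<^sup>* \<and> (y,w) \<in> (adj E)\<^sup>*) \<or> ((u,y) \<in> (adj E)\<^sup>* \<and> (x,w) \<in> (adj E)\<^sup>*))"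
      using add_edge_reach[OF xy] by simp
    also have "\<dots> \<longleftrightarrow> w \<in> (if u \<in> comp N E x \<union> comp N E y then comp N E x \<union> comp N E y else comp N E u)"
    proof (cases "u \<in> verts N")
      case False
      have nov: "\<And>b. (u,b) \<in> (adj E)\<^sup>* \<Longrightarrow> u = b"
      proof -
        fix b assume "(u,b) \<in> (adj E)\<^sup>*"
        then have "u = b \<or> (\<exists>z. (u,z) \<in> adj E)" by (metis converse_rtranclE)
        then show "u = b" using False adj_verts[OF g] by blast
      qed
      then have "(u,x) \<notin> (adj E)\<^sup>*" "(u,y) \<notin> (adj E)\<^sup>*" "u \<notin> comp N E x" "u \<notin> comp N E y"
        using x y False comp_sub by blast+
      moreover have "(u,w) \<in> (adj E)\<^sup>* \<and> w \<in> verts N \<longleftrightarrow> w \<in> comp N E u"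
        by (auto simp add: comp_mem_iff)
      ultimately show ?thesis by auto
    next
      case u: True
      have e1: "(u,w) \<in> (adj E)\<^sup>* \<and> w \<in> verts N \<longleftrightarrow> w \<in> comp N E u" by (auto simp add: comp_mem_iff)
      have e2: "(u,x) \<in> (adj E)\<^sup>* \<longleftrightarrow> u \<in> comp N E x" using r[of u x] u x comp_eq_iff[OF g x u] comp_eq_iff[OF g u x] by auto
      have e3: "(u,y) \<in> (adj E)\<^sup>* \<longleftrightarrow> u \<in> comp N E y" using r[of u y] u y comp_eq_iff[OF g y u] comp_eq_iff[OF g u y] by auto
      have e4: "(y,w) \<in> (adj E)\<^sup>* \<and> w \<in> verts N \<longleftrightarrow> w \<in> comp N E y" by (auto simp add: comp_mem_iff)
      have e5: "(x,w) \<in> (adj E)\<^sup>* \<and> w \<in> verts N \<longleftrightarrow> w \<in> comp N E x" by (auto simp add: comp_mem_iff)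
      have e6: "u \<in> comp N E x \<Longrightarrow> comp N E u = comp N E x" using comp_eq[OF g] by blast
      have e7: "u \<in> comp N E y \<Longrightarrow> comp N E u = comp N E y" using comp_eq[OF g] by blast
      show ?thesis using e1 e2 e3 e4 e5 e6 e7 by auto
    qed
    finally show "w \<in> comp N (insert {x,y} E) u \<longleftrightarrow> w \<in> (if u \<in> comp N E x \<union> comp N E y then comp N E x \<union> comp N E y else comp N E u)" .
  qed
qed

lemma components_insert:
  assumes g: "is_graph N E" and x: "x \<in> verts N" and y: "y \<in> verts N" and xy: "x \<noteq> y"
  shows "components N (insert {x,y} E) =
     (if y \<in> comp N E x then components N E
      else insert (comp N E x \<union> comp N E y) (components N E - {comp N E x, comp N E y}))"
proof (cases "y \<in> comp N E x")
  case True
  then have cy: "comp N E y = comp N E x" using comp_eq[OF g] by blast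
  have "\<And>u. u \<in> verts N \<Longrightarrow> comp N (insert {x,y} E) u = comp N E u"
    using comp_insert[OF g x y xy] cy comp_eq[OF g] by auto
  then have "components N (insert {x,y} E) = components N E" unfolding components_def by auto
  then show ?thesis using True by simp
next
  case False
  let ?U = "comp N E x \<union> comp N E y"
  have ci: "\<And>u. comp N (insert {x,y} E) u = (if u \<in> ?U then ?U else comp N E u)"
    using comp_insert[OF g x y xy] by simp
  have "components N (insert {x,y} E) = insert ?U (components N E - {comp N E x, comp N E y})"
  proof
    show "components N (insert {x,y} E) \<subseteq> insert ?U (components N E - {comp N E x, comp N E y})"
    proof
      fix C assume "C \<in> components N (insert {x,y} E)"
      then obtain u where u: "u \<in> verts N" and C: "C = comp N (insert {x,y} E) u" unfolding components_def by auto
      show "C \<in> insert ?U (components N E - {comp N E x, comp N E y})"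
      proof (cases "u \<in> ?U")
        case True then show ?thesis using C ci by simp
      next
        case False
        then have "comp N E u \<noteq> comp N E x" "comp N E u \<noteq> comp N E y"
          using comp_self[OF u] by auto
        then show ?thesis using C ci False comp_in_components[OF u] by simp
      qed
    qed
  next
    show "insert ?U (components N E - {comp N E x, comp N E y}) \<subseteq> components N (insert {x,y} E)"
    proof
      fix C assume C: "C \<in> insert ?U (components N E - {comp N E x, comp N E y})"
      show "C \<in> components N (insert {x,y} E)"
      proof (cases "C = ?U")
        case True
        then have "C = comp N (insert {x,y} E) x" using ci comp_self[OF x] by simp
        then show ?thesis using comp_in_components[OF x] by simp
      next
        case False
        then have C1: "C \<in> components N E" "C \<noteq> comp N E x" "C \<noteq> comp N E y" using C by auto
        then obtain u where u: "u \<in> verts N" "C = comp N E u" unfolding components_def by auto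
        have "u \<notin> ?U"
        proof
          assume "u \<in> ?U"
          then have "comp N E u = comp N E x \<or> comp N E u = comp N E y" using comp_eq[OF g] by blast
          then show False using C1 u by auto
        qed
        then have "C = comp N (insert {x,y} E) u" using ci u by simp
        then show ?thesis using comp_in_components[OF u(1)] by simp
      qed
    qed
  qed
  then show ?thesis using False by simp
qed

lemma card_components_insert:
  assumes g: "is_graph N E" and x: "x \<in> verts N" and y: "y \<in> verts N" and xy: "x \<noteq> y"
  shows "card (components N (insert {x,y} E)) =
     (if y \<in> comp N E x then card (components N E) else card (components N E) - 1)"
proof (cases "y \<in> comp N E x")
  case True then show ?thesis using components_insert[OF assms] by simp
next
  case False
  let ?U = "comp N E x \<union> comp N E y"
  have ne: "comp N E x \<noteq> comp N E y" using False comp_self[OF y] by auto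
  have inx: "comp N E x \<in> components N E" "comp N E y \<in> components N E"
    using comp_in_components x y by auto
  have nU: "?U \<notin> components N E - {comp N E x, comp N E y}"
  proof
    assume "?U \<in> components N E - {comp N E x, comp N E y}"
    then have "?U \<in> components N E" by simp
    then have "comp N E x = ?U" using components_comp[OF g] comp_self[OF x] by blast
    then show False using False comp_self[OF y] by auto
  qed
  have "card (components N E - {comp N E x, comp N E y}) = card (components N E) - 2"
    using inx ne by (simp add: card_Diff_subset)
  moreover have "card (components N E) \<ge> 2"
  proof -
    have "{comp N E x, comp N E y} \<subseteq> components N E" using inx by simp
    then have "card {comp N E x, comp N E y} \<le> card (components N E)" by (simp add: card_mono)
    then show ?thesis using ne by simp
  qed
  ultimately show ?thesis using components_insert[OF assms] False nU by simp
qed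

lemma comp_empty: "u \<in> verts N \<Longrightarrow> comp N {} u = {u}"
  unfolding comp_def adj_def by auto

lemma card_components_empty: "card (components N {}) = N"
proof -
  have "components N {} = (\<lambda>u. {u}) ` verts N" unfolding components_def using comp_empty by auto
  then show ?thesis by (simp add: card_image verts_def)
qed

lemma components_lower:
  assumes "is_graph N E"
  shows "N \<le> card (components N E) + card E"
proof -
  have "finite E" using is_graph_finite[OF assms] .
  then show ?thesis using assms
  proof (induction E rule: finite_induct)
    case empty
    then show ?case using card_components_empty by simp
  next
    case (insert e F)
    have gF: "is_graph N F" using is_graph_mono[OF insert.prems] by blast
    obtain x y where e: "e = {x,y}" "x \<in> verts N" "y \<in> verts N" "x \<noteq> y"
      using is_graphD[OF insert.prems] by blast
    have "card (components N (insert e F)) \<ge> card (components N F) - 1"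
      using card_components_insert[OF gF e(2-4)] e(1) by simp
    then show ?case using insert.IH[OF gF] insert.hyps by simp
  qed
qed


definition edges_in :: "nat set set \<Rightarrow> nat set \<Rightarrow> nat set set" where
  "edges_in E C = {e \<in> E. e \<subseteq> C}"

lemma sum_card_components: "is_graph N E \<Longrightarrow> (\<Sum>C\<in>components N E. card C) = N"
proof -
  assume g: "is_graph N E"
  have "pairwise disjnt (components N E)"
    unfolding pairwise_def disjnt_def using components_disj[OF g] by (metis disjoint_iff)
  moreover have "\<And>C. C \<in> components N E \<Longrightarrow> finite C" using components_sub[of _ N E] finite_subset[OF _ verts_finite] by metis
  ultimately have "card (\<Union>(components N E)) = (\<Sum>C\<in>components N E. card C)"
    by (rule card_Union_disjoint)
  then show ?thesis using Union_components[of N E] by (simp add: verts_def)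
qed

lemma card_edges_sum: "is_graph N E \<Longrightarrow> card E = (\<Sum>C\<in>components N E. card (edges_in E C))"
proof -
  assume g: "is_graph N E"
  have eq: "E = (\<Union>C\<in>components N E. edges_in E C)"
  proof
    show "E \<subseteq> (\<Union>C\<in>components N E. edges_in E C)"
    proof
      fix e assume e: "e \<in> E"
      obtain x y where xy: "e = {x,y}" "x \<in> verts N" using is_graphD[OF g e] by blast
      then have "e \<subseteq> comp N E x" using edge_sub_comp[OF g e] by simp
      then show "e \<in> (\<Union>C\<in>components N E. edges_in E C)"
        using comp_in_components[OF xy(2)] e unfolding edges_in_def by blast
    qed
  qed (auto simp: edges_in_def)
  have "finite E" using is_graph_finite[OF g] .
  have "card (\<Union>C\<in>components N E. edges_in E C) = (\<Sum>C\<in>components N E. card (edges_in E C))"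
  proof (rule card_UN_disjoint)
    show "finite (components N E)" by simp
    show "\<forall>C\<in>components N E. finite (edges_in E C)" using \<open>finite E\<close> unfolding edges_in_def by simp
    show "\<forall>C\<in>components N E. \<forall>D\<in>components N E. C \<noteq> D \<longrightarrow> edges_in E C \<inter> edges_in E D = {}"
    proof (intro ballI impI)
      fix C D assume C: "C \<in> components N E" and D: "D \<in> components N E" and ne: "C \<noteq> D"
      show "edges_in E C \<inter> edges_in E D = {}"
      proof (rule ccontr)
        assume "edges_in E C \<inter> edges_in E D \<noteq> {}"
        then obtain e where e: "e \<in> E" "e \<subseteq> C" "e \<subseteq> D" unfolding edges_in_def by blast
        obtain x y where "e = {x,y}" using is_graphD[OF g e(1)] by blast
        then have "x \<in> C" "x \<in> D" using e by auto
        then show False using components_disj[OF g C D] ne by blast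
      qed
    qed
  qed
  then show ?thesis using eq by simp
qed

lemma forest_card:
  assumes g: "is_graph N E" and t: "\<forall>C\<in>components N E. tree_comp E C"
  shows "card E + card (components N E) = N"
proof -
  have "card E = (\<Sum>C\<in>components N E. card C - 1)"
    using card_edges_sum[OF g] t unfolding tree_comp_def edges_in_def by simp
  moreover have "(\<Sum>C\<in>components N E. card C - 1) + card (components N E) = (\<Sum>C\<in>components N E. card C)"
  proof -
    have "\<And>C. C \<in> components N E \<Longrightarrow> card C - 1 + 1 = card C"
    proof -
      fix C assume C: "C \<in> components N E"
      then have "C \<noteq> {}" "finite C" using components_nonempty[OF C] components_sub[OF C] finite_subset[OF _ verts_finite] by metis+
      then show "card C - 1 + 1 = card C" by (simp add: card_gt_0_iff)
    qed
    then have "(\<Sum>C\<in>components N E. card C - 1 + 1) = (\<Sum>C\<in>components N E. card C)" by (rule sum.cong[OF refl])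
    moreover have "(\<Sum>C\<in>components N E. card C - 1 + 1) = (\<Sum>C\<in>components N E. card C - 1) + (\<Sum>C\<in>components N E. 1)"
      by (rule sum.distrib)
    moreover have "(\<Sum>C\<in>components N E. (1::nat)) = card (components N E)" by simp
    ultimately show ?thesis by linarith
  qed
  ultimately show ?thesis using sum_card_components[OF g] by simp
qed

lemma comp_edges_in:
  assumes g: "is_graph N E" and X: "X \<in> components N E" and u: "u \<in> verts N"
  shows "comp N (edges_in E X) u = (if u \<in> X then X else {u})"
proof (cases "u \<in> X")
  case True
  have cu: "comp N E u = X" using components_comp[OF g X True] .
  have sub: "adj (edges_in E X) \<subseteq> adj E" unfolding adj_def edges_in_def by auto
  have "comp N (edges_in E X) u = X"
  proof
    show "comp N (edges_in E X) u \<subseteq> X"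
      using rtrancl_mono[OF sub] cu unfolding comp_def by blast
    show "X \<subseteq> comp N (edges_in E X) u"
    proof
      fix w assume w: "w \<in> X"
      then have uw: "(u,w) \<in> (adj E)\<^sup>*" using cu comp_mem_iff by blast
      have "(u,w) \<in> (adj (edges_in E X))\<^sup>*" using uw
      proof (induction w rule: rtrancl_induct)
        case base then show ?case by simp
      next
        case (step a b)
        have "a \<in> X" using step.hyps(1) reach_verts[OF g step.hyps(1) u] cu comp_mem_iff by blast
        moreover have "(u,b) \<in> (adj E)\<^sup>*" using step.hyps by (rule rtrancl_into_rtrancl)
        then have "b \<in> X" using reach_verts[OF g _ u] cu comp_mem_iff by blast
        ultimately have "(a,b) \<in> adj (edges_in E X)" using step.hyps(2) unfolding adj_def edges_in_def by auto
        then show ?case by (rule rtrancl_into_rtrancl[OF step.IH])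
      qed
      then show "w \<in> comp N (edges_in E X) u" using w components_sub[OF X] comp_mem_iff by blast
    qed
  qed
  then show ?thesis using True by simp
next
  case False
  have "\<And>b. (u,b) \<in> (adj (edges_in E X))\<^sup>* \<Longrightarrow> u = b"
  proof -
    fix b assume "(u,b) \<in> (adj (edges_in E X))\<^sup>*"
    then have "u = b \<or> (\<exists>z. (u,z) \<in> adj (edges_in E X))" by (metis converse_rtranclE)
    then show "u = b" using False unfolding adj_def edges_in_def by auto
  qed
  then have "comp N (edges_in E X) u = {u}" using u unfolding comp_def by auto
  then show ?thesis using False by simp
qed

lemma comp_lower:
  assumes g: "is_graph N E" and X: "X \<in> components N E"
  shows "card X \<le> card (edges_in E X) + 1"
proof -
  have gX: "is_graph N (edges_in E X)" by (rule is_graph_mono[OF g]) (simp add: edges_in_def)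
  have XV: "X \<subseteq> verts N" using components_sub[OF X] .
  obtain x where x: "x \<in> X" using components_nonempty[OF X] by blast
  have "components N (edges_in E X) = insert X ((\<lambda>u. {u}) ` (verts N - X))"
  proof
    show "components N (edges_in E X) \<subseteq> insert X ((\<lambda>u. {u}) ` (verts N - X))"
    proof
      fix C assume "C \<in> components N (edges_in E X)"
      then obtain u where u: "u \<in> verts N" "C = comp N (edges_in E X) u" unfolding components_def by blast
      show "C \<in> insert X ((\<lambda>u. {u}) ` (verts N - X))"
      proof (cases "u \<in> X")
        case True then show ?thesis using u comp_edges_in[OF g X u(1)] by simp
      next
        case False then show ?thesis using u comp_edges_in[OF g X u(1)] by simp
      qed
    qed
    show "insert X ((\<lambda>u. {u}) ` (verts N - X)) \<subseteq> components N (edges_in E X)"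
    proof
      fix C assume "C \<in> insert X ((\<lambda>u. {u}) ` (verts N - X))"
      then show "C \<in> components N (edges_in E X)"
      proof
        assume "C = X"
        then have "C = comp N (edges_in E X) x" using comp_edges_in[OF g X, of x] x XV by (simp add: subsetD)
        then show ?thesis using comp_in_components[OF subsetD[OF XV x]] by simp
      next
        assume "C \<in> (\<lambda>u. {u}) ` (verts N - X)"
        then obtain u where u: "u \<in> verts N" "u \<notin> X" "C = {u}" by blast
        then have "C = comp N (edges_in E X) u" using comp_edges_in[OF g X u(1)] by simp
        then show ?thesis using comp_in_components[OF u(1)] by simp
      qed
    qed
  qed
  moreover have "X \<notin> (\<lambda>u. {u}) ` (verts N - X)" using x by blast
  moreover have "card ((\<lambda>u. {u}) ` (verts N - X)) = card (verts N - X)" by (rule card_image) (simp add: inj_on_def)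
  moreover have "finite ((\<lambda>u. {u}) ` (verts N - X))" by simp
  ultimately have "card (components N (edges_in E X)) = card (verts N - X) + 1"
    by simp
  moreover have fX: "finite X" using finite_subset[OF XV verts_finite] .
  moreover have "card (verts N - X) = N - card X" using card_Diff_subset[OF fX XV] by (simp add: verts_def)
  moreover have "card X \<le> N" using card_mono[OF verts_finite XV] by (simp add: verts_def)
  ultimately show ?thesis using components_lower[OF gX] by linarith
qed


definition nbrs :: "nat set set \<Rightarrow> nat \<Rightarrow> nat set" where
  "nbrs E v = {w. {v,w} \<in> E}"

lemma nbrs_adj: "is_graph N E \<Longrightarrow> w \<in> nbrs E v \<longleftrightarrow> (v,w) \<in> adj E"
  unfolding nbrs_def using adj_iff_g by blast

lemma nbrs_verts: "is_graph N E \<Longrightarrow> w \<in> nbrs E v \<Longrightarrow> w \<in> verts N \<and> v \<in> verts N \<and> w \<noteq> v"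
proof -
  assume g: "is_graph N E" and w: "w \<in> nbrs E v"
  then have "(v,w) \<in> adj E" using nbrs_adj by blast
  then show ?thesis using adj_verts[OF g] adj_iff by blast
qed

lemma nbrs_sym: "w \<in> nbrs E v \<longleftrightarrow> v \<in> nbrs E w"
  unfolding nbrs_def by (simp add: insert_commute)

lemma nbrs_finite: "is_graph N E \<Longrightarrow> finite (nbrs E v)"
proof -
  assume g: "is_graph N E"
  have "nbrs E v \<subseteq> verts N" using nbrs_verts[OF g] by blast
  then show ?thesis using finite_subset verts_finite by blast
qed

lemma deg_nbrs: assumes g: "is_graph N E" shows "deg E v = card (nbrs E v)"
proof -
  have "bij_betw (\<lambda>w. {v,w}) (nbrs E v) {e \<in> E. v \<in> e}"
  proof (rule bij_betw_imageI)
    show "inj_on (\<lambda>w. {v,w}) (nbrs E v)" unfolding inj_on_def by (auto simp: doubleton_eq_iff)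
    show "(\<lambda>w. {v,w}) ` nbrs E v = {e \<in> E. v \<in> e}"
    proof
      show "(\<lambda>w. {v,w}) ` nbrs E v \<subseteq> {e \<in> E. v \<in> e}" unfolding nbrs_def by auto
      show "{e \<in> E. v \<in> e} \<subseteq> (\<lambda>w. {v,w}) ` nbrs E v"
      proof
        fix e assume e: "e \<in> {e \<in> E. v \<in> e}"
        then obtain p q where pq: "e = {p,q}" using is_graphD[OF g] by blast
        show "e \<in> (\<lambda>w. {v,w}) ` nbrs E v"
        proof (cases "v = p")
          case True then show ?thesis using e pq unfolding nbrs_def by auto
        next
          case False then have "v = q" using e pq by auto
          then show ?thesis using e pq unfolding nbrs_def by (auto simp: insert_commute)
        qed
      qed
    qed
  qed
  then show ?thesis unfolding deg_def by (simp add: bij_betw_same_card)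
qed

lemma nbrs_comp: "is_graph N E \<Longrightarrow> w \<in> nbrs E v \<Longrightarrow> w \<in> comp N E v"
  unfolding nbrs_def using edge_in_comp by blast

lemma comp_isolated:
  assumes g: "is_graph N E" and x: "x \<in> verts N" and n: "nbrs E x = {}"
  shows "comp N E x = {x}"
proof -
  have "\<And>b. (x,b) \<in> (adj E)\<^sup>* \<Longrightarrow> x = b"
  proof -
    fix b assume "(x,b) \<in> (adj E)\<^sup>*"
    then have "x = b \<or> (\<exists>z. (x,z) \<in> adj E)" by (metis converse_rtranclE)
    then show "x = b" using n nbrs_adj[OF g] by blast
  qed
  then show ?thesis using x unfolding comp_def by auto
qed

lemma nbrs_insert: "nbrs (insert {x,y} E) u = nbrs E u \<union> (if u = x then {y} else {}) \<union> (if u = y then {x} else {})"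
  unfolding nbrs_def by (auto simp: doubleton_eq_iff)


locale glue =
  fixes N :: nat and E :: "nat set set" and v a b :: nat
  assumes g: "is_graph N E" and v: "v \<in> verts N" and a: "a \<in> verts N" and b: "b \<in> verts N"
    and av: "a \<notin> comp N E v" and bv: "b \<notin> comp N E v" and ba: "b \<notin> comp N E a"
begin

abbreviation "E2 \<equiv> insert {v,a} (insert {v,b} E)"
abbreviation "Cv \<equiv> comp N E v"
abbreviation "Ca \<equiv> comp N E a"
abbreviation "Cb \<equiv> comp N E b"
abbreviation "U \<equiv> Cv \<union> Ca \<union> Cb"

lemma vv: "v \<in> Cv" and aa: "a \<in> Ca" and bb: "b \<in> Cb"
  using comp_self v a b by auto

lemma ne: "a \<noteq> v" "b \<noteq> v" "a \<noteq> b"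
  using vv aa bb av bv ba by auto

lemma notin: "v \<notin> Ca" "v \<notin> Cb" "a \<notin> Cb" "a \<notin> Cv" "b \<notin> Cv" "b \<notin> Ca"
proof -
  show "a \<notin> Cv" "b \<notin> Cv" "b \<notin> Ca" using av bv ba by auto
  show "v \<notin> Ca" using comp_eq[OF g, of v a] vv aa av by auto
  show "v \<notin> Cb" using comp_eq[OF g, of v b] vv bb bv by auto
  show "a \<notin> Cb" using comp_eq[OF g, of a b] aa bb ba by auto
qed

lemma disj: "Cv \<inter> Ca = {}" "Cv \<inter> Cb = {}" "Ca \<inter> Cb = {}"
proof -
  have "Cv \<noteq> Ca" "Cv \<noteq> Cb" "Ca \<noteq> Cb" using notin vv aa bb by auto
  then show "Cv \<inter> Ca = {}" "Cv \<inter> Cb = {}" "Ca \<inter> Cb = {}" using comp_disj[OF g] by auto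
qed

lemma g1: "is_graph N (insert {v,b} E)" using is_graph_insert[OF g v b] ne by simp
lemma g2: "is_graph N E2" using is_graph_insert[OF g1 v a] ne by simp

lemma comp1: "comp N (insert {v,b} E) u = (if u \<in> Cv \<union> Cb then Cv \<union> Cb else comp N E u)"
  using comp_insert[OF g v b] ne by simp

lemma comp2: "comp N E2 u = (if u \<in> U then U else comp N E u)"
proof -
  have c1v: "comp N (insert {v,b} E) v = Cv \<union> Cb" using comp1 vv by simp
  have c1a: "comp N (insert {v,b} E) a = Ca" using comp1 notin by simp
  have "comp N E2 u = (if u \<in> (Cv \<union> Cb) \<union> Ca then (Cv \<union> Cb) \<union> Ca else comp N (insert {v,b} E) u)"
    using comp_insert[OF g1 v a] ne c1v c1a by simp
  moreover have "(Cv \<union> Cb) \<union> Ca = U" by auto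
  ultimately show ?thesis using comp1 by (simp split: if_splits)
qed

lemma comp_cases: "X \<in> components N E \<Longrightarrow> X \<noteq> Cv \<Longrightarrow> X \<noteq> Ca \<Longrightarrow> X \<noteq> Cb \<Longrightarrow> X \<inter> U = {}"
proof -
  assume X: "X \<in> components N E" "X \<noteq> Cv" "X \<noteq> Ca" "X \<noteq> Cb"
  then obtain u where u: "u \<in> verts N" "X = comp N E u" unfolding components_def by blast
  have "X \<inter> Cv = {}" "X \<inter> Ca = {}" "X \<inter> Cb = {}" using comp_disj[OF g] u X by auto
  then show "X \<inter> U = {}" by blast
qed

lemma components2: "components N E2 = insert U (components N E - {Cv, Ca, Cb})"
proof
  show "components N E2 \<subseteq> insert U (components N E - {Cv, Ca, Cb})"
  proof
    fix C assume "C \<in> components N E2"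
    then obtain u where u: "u \<in> verts N" "C = comp N E2 u" unfolding components_def by blast
    show "C \<in> insert U (components N E - {Cv, Ca, Cb})"
    proof (cases "u \<in> U")
      case True then show ?thesis using u comp2 by simp
    next
      case False
      then have "comp N E u \<noteq> Cv" "comp N E u \<noteq> Ca" "comp N E u \<noteq> Cb" using comp_self[OF u(1)] by auto
      then show ?thesis using u comp2 False comp_in_components[OF u(1)] by simp
    qed
  qed
  show "insert U (components N E - {Cv, Ca, Cb}) \<subseteq> components N E2"
  proof
    fix C assume C: "C \<in> insert U (components N E - {Cv, Ca, Cb})"
    show "C \<in> components N E2"
    proof (cases "C = U")
      case True
      then have "C = comp N E2 v" using comp2 vv by simp
      then show ?thesis using comp_in_components[OF v] by simp
    next
      case False
      then have C1: "C \<in> components N E" "C \<noteq> Cv" "C \<noteq> Ca" "C \<noteq> Cb" using C by auto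
      then obtain u where u: "u \<in> verts N" "C = comp N E u" unfolding components_def by blast
      have "u \<notin> U" using comp_cases[OF C1] u comp_self[OF u(1)] by blast
      then have "C = comp N E2 u" using comp2 u by simp
      then show ?thesis using comp_in_components[OF u(1)] by simp
    qed
  qed
qed

lemma card_components2: "card (components N E2) + 2 = card (components N E)"
proof -
  have inx: "Cv \<in> components N E" "Ca \<in> components N E" "Cb \<in> components N E"
    using comp_in_components v a b by auto
  have dist: "Cv \<noteq> Ca" "Cv \<noteq> Cb" "Ca \<noteq> Cb" using vv aa bb notin by auto
  have nU: "U \<notin> components N E"
  proof
    assume "U \<in> components N E"
    then have "comp N E v = U" using components_comp[OF g] vv by blast
    then show False using aa notin by auto
  qed
  have "card (components N E - {Cv, Ca, Cb}) = card (components N E) - 3"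
    using inx dist by (simp add: card_Diff_subset)
  moreover have "card {Cv, Ca, Cb} \<le> card (components N E)"
    using inx by (intro card_mono) auto
  moreover have "card {Cv, Ca, Cb} = 3" using dist by simp
  ultimately show ?thesis using components2 nU by simp
qed

lemma nbrs2: "nbrs E2 u = nbrs E u \<union> (if u = v then {a,b} else {}) \<union> (if u = a \<or> u = b then {v} else {})"
  using ne by (auto simp: nbrs_insert)

lemma nbrs_notin: "a \<notin> nbrs E v" "b \<notin> nbrs E v" "v \<notin> nbrs E a" "v \<notin> nbrs E b"
proof -
  show "a \<notin> nbrs E v" using nbrs_comp[OF g, of a v] notin by blast
  show "b \<notin> nbrs E v" using nbrs_comp[OF g, of b v] notin by blast
  show "v \<notin> nbrs E a" using nbrs_comp[OF g, of v a] notin by blast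
  show "v \<notin> nbrs E b" using nbrs_comp[OF g, of v b] notin by blast
qed

lemma deg2_v: "deg E2 v = deg E v + 2"
proof -
  have "nbrs E2 v = insert a (insert b (nbrs E v))" using nbrs2 ne by auto
  then show ?thesis using deg_nbrs[OF g2] deg_nbrs[OF g] nbrs_finite[OF g] nbrs_notin ne by simp
qed

lemma deg2_a: "deg E2 a = deg E a + 1"
proof -
  have "nbrs E2 a = insert v (nbrs E a)" using nbrs2 ne by auto
  then show ?thesis using deg_nbrs[OF g2] deg_nbrs[OF g] nbrs_finite[OF g] nbrs_notin by simp
qed

lemma deg2_b: "deg E2 b = deg E b + 1"
proof -
  have "nbrs E2 b = insert v (nbrs E b)" using nbrs2 ne by auto
  then show ?thesis using deg_nbrs[OF g2] deg_nbrs[OF g] nbrs_finite[OF g] nbrs_notin by simp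
qed

lemma deg2_other: "u \<noteq> v \<Longrightarrow> u \<noteq> a \<Longrightarrow> u \<noteq> b \<Longrightarrow> deg E2 u = deg E u"
  using nbrs2[of u] deg_nbrs[OF g2] deg_nbrs[OF g] by simp

lemma edges2_other: "X \<in> components N E \<Longrightarrow> X \<noteq> Cv \<Longrightarrow> X \<noteq> Ca \<Longrightarrow> X \<noteq> Cb \<Longrightarrow> edges_in E2 X = edges_in E X"
proof -
  assume X: "X \<in> components N E" "X \<noteq> Cv" "X \<noteq> Ca" "X \<noteq> Cb"
  then have "X \<inter> U = {}" by (rule comp_cases)
  then have "v \<notin> X" using vv by blast
  then show ?thesis unfolding edges_in_def by auto
qed

lemma edges2_U: "card (edges_in E2 U) = card (edges_in E Cv) + card (edges_in E Ca) + card (edges_in E Cb) + 2"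
proof -
  have fE: "finite E" using is_graph_finite[OF g] .
  have eq: "edges_in E2 U = ((edges_in E Cv \<union> edges_in E Ca) \<union> edges_in E Cb) \<union> {{v,a},{v,b}}"
  proof
    show "edges_in E2 U \<subseteq> ((edges_in E Cv \<union> edges_in E Ca) \<union> edges_in E Cb) \<union> {{v,a},{v,b}}"
    proof
      fix e assume e: "e \<in> edges_in E2 U"
      show "e \<in> ((edges_in E Cv \<union> edges_in E Ca) \<union> edges_in E Cb) \<union> {{v,a},{v,b}}"
      proof (cases "e \<in> E")
        case False then show ?thesis using e unfolding edges_in_def by auto
      next
        case True
        obtain p q where pq: "e = {p,q}" using is_graphD[OF g True] by blast
        have pU: "p \<in> U" using e pq unfolding edges_in_def by auto
        have sub: "e \<subseteq> comp N E p" using edge_sub_comp[OF g True] pq by simp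
        have "comp N E p = Cv \<or> comp N E p = Ca \<or> comp N E p = Cb" using pU comp_eq[OF g] by blast
        then show ?thesis using sub True unfolding edges_in_def by auto
      qed
    qed
    show "((edges_in E Cv \<union> edges_in E Ca) \<union> edges_in E Cb) \<union> {{v,a},{v,b}} \<subseteq> edges_in E2 U"
      using vv aa bb unfolding edges_in_def by auto
  qed
  have fin: "finite (edges_in E X)" for X using fE unfolding edges_in_def by simp
  have d1: "edges_in E Cv \<inter> edges_in E Ca = {}"
  proof (rule ccontr)
    assume "edges_in E Cv \<inter> edges_in E Ca \<noteq> {}"
    then obtain e where e: "e \<in> E" "e \<subseteq> Cv" "e \<subseteq> Ca" unfolding edges_in_def by blast
    obtain p q where "e = {p,q}" using is_graphD[OF g e(1)] by blast
    then show False using e disj by blast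
  qed
  have d2: "(edges_in E Cv \<union> edges_in E Ca) \<inter> edges_in E Cb = {}"
  proof (rule ccontr)
    assume "(edges_in E Cv \<union> edges_in E Ca) \<inter> edges_in E Cb \<noteq> {}"
    then obtain e where e: "e \<in> E" "e \<subseteq> Cv \<or> e \<subseteq> Ca" "e \<subseteq> Cb" unfolding edges_in_def by blast
    obtain p q where "e = {p,q}" using is_graphD[OF g e(1)] by blast
    then show False using e disj by blast
  qed
  have d3: "((edges_in E Cv \<union> edges_in E Ca) \<union> edges_in E Cb) \<inter> {{v,a},{v,b}} = {}"
    using notin unfolding edges_in_def by auto
  have c2: "card {{v,a},{v,b}} = 2" using ne by (simp add: doubleton_eq_iff)
  have "card (((edges_in E Cv \<union> edges_in E Ca) \<union> edges_in E Cb) \<union> {{v,a},{v,b}})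
     = card ((edges_in E Cv \<union> edges_in E Ca) \<union> edges_in E Cb) + card {{v,a},{v,b}}"
    by (rule card_Un_disjoint) (use fin d3 in auto)
  moreover have "card ((edges_in E Cv \<union> edges_in E Ca) \<union> edges_in E Cb) = card (edges_in E Cv \<union> edges_in E Ca) + card (edges_in E Cb)"
    by (rule card_Un_disjoint) (use fin d2 in auto)
  moreover have "card (edges_in E Cv \<union> edges_in E Ca) = card (edges_in E Cv) + card (edges_in E Ca)"
    by (rule card_Un_disjoint) (use fin d1 in auto)
  ultimately show ?thesis unfolding eq using c2 by simp
qed

end


definition bforest :: "nat \<Rightarrow> nat set set \<Rightarrow> bool" where
  "bforest N E \<longleftrightarrow> is_graph N E \<and> (\<forall>C\<in>components N E. binary_tree_comp E C)"

lemma binary_forest_iff: "binary_forest N m E \<longleftrightarrow> bforest N E \<and> card (components N E) = m"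
  unfolding binary_forest_def bforest_def by auto

lemma bforest_graph: "bforest N E \<Longrightarrow> is_graph N E" unfolding bforest_def by simp

lemma bforest_tree: "bforest N E \<Longrightarrow> C \<in> components N E \<Longrightarrow> tree_comp E C"
  unfolding bforest_def binary_tree_comp_def by simp

lemma bforest_card: "bforest N E \<Longrightarrow> card E + card (components N E) = N"
proof -
  assume bf: "bforest N E"
  then have g: "is_graph N E" by (rule bforest_graph)
  have "\<forall>C\<in>components N E. tree_comp E C" using bforest_tree[OF bf] by simp
  then show ?thesis using forest_card[OF g] by simp
qed

lemma bf_single:
  assumes bf: "bforest N E" and C: "C \<in> components N E" and c1: "card C = 1"
  obtains x where "C = {x}" "deg E x = 0" "nbrs E x = {}"
proof -
  have g: "is_graph N E" using bf bforest_graph by blast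
  obtain x where Cx: "C = {x}" using c1 card_1_singletonE by blast
  have x: "x \<in> verts N" using components_sub[OF C] Cx by blast
  have "comp N E x = C" using components_comp[OF g C] Cx by blast
  then have "nbrs E x \<subseteq> {x}" using nbrs_comp[OF g] Cx by blast
  moreover have "x \<notin> nbrs E x" using nbrs_verts[OF g] by blast
  ultimately have n: "nbrs E x = {}" by blast
  then have "deg E x = 0" using deg_nbrs[OF g] by simp
  then show ?thesis using that Cx n by blast
qed

lemma bf_nontriv_deg:
  assumes g: "is_graph N E" and C: "C \<in> components N E" and c1: "card C \<noteq> 1" and x: "x \<in> C"
  shows "nbrs E x \<noteq> {}"
proof
  assume n: "nbrs E x = {}"
  have "x \<in> verts N" using components_sub[OF C] x by blast
  then have "comp N E x = {x}" using comp_isolated[OF g _ n] by blast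
  then have "C = {x}" using components_comp[OF g C x] by simp
  then show False using c1 by simp
qed

lemma bf_nontriv:
  assumes bf: "bforest N E" and C: "C \<in> components N E" and c1: "card C \<noteq> 1"
  shows "\<exists>!r. r \<in> C \<and> deg E r = 2" and "\<And>u. u \<in> C \<Longrightarrow> deg E u \<noteq> 2 \<Longrightarrow> deg E u = 3 \<or> deg E u = 1"
proof -
  have "binary_tree_comp E C" using bf C unfolding bforest_def by blast
  then have "(\<exists>!r. r \<in> C \<and> deg E r = 2) \<and> (\<forall>u \<in> C. deg E u \<noteq> 2 \<longrightarrow> deg E u = 3 \<or> deg E u = 1)"
    using c1 unfolding binary_tree_comp_def by blast
  then show "\<exists>!r. r \<in> C \<and> deg E r = 2" and "\<And>u. u \<in> C \<Longrightarrow> deg E u \<noteq> 2 \<Longrightarrow> deg E u = 3 \<or> deg E u = 1"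
    by blast+
qed

definition desig :: "nat \<Rightarrow> nat set set \<Rightarrow> nat set" where
  "desig N E = {x \<in> verts N. deg E x = 0 \<or> deg E x = 2}"

lemma desig_unique:
  assumes bf: "bforest N E" and C: "C \<in> components N E"
  shows "\<exists>!r. r \<in> C \<and> r \<in> desig N E"
proof (cases "card C = 1")
  case True
  obtain x where x: "C = {x}" "deg E x = 0" using bf_single[OF bf C True] by blast
  have "x \<in> verts N" using components_sub[OF C] x by blast
  then show ?thesis using x unfolding desig_def by auto
next
  case False
  have g: "is_graph N E" using bf bforest_graph by blast
  obtain r where r: "r \<in> C" "deg E r = 2" and un: "\<And>r'. r' \<in> C \<Longrightarrow> deg E r' = 2 \<Longrightarrow> r' = r"
    using bf_nontriv(1)[OF bf C False] by blast
  have nz: "\<And>x. x \<in> C \<Longrightarrow> deg E x \<noteq> 0"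
    using bf_nontriv_deg[OF g C False] deg_nbrs[OF g] nbrs_finite[OF g] by simp
  show ?thesis
  proof
    show "r \<in> C \<and> r \<in> desig N E" using r components_sub[OF C] unfolding desig_def by auto
    show "\<And>r'. r' \<in> C \<and> r' \<in> desig N E \<Longrightarrow> r' = r" using un nz unfolding desig_def by blast
  qed
qed

lemma card_desig:
  assumes bf: "bforest N E"
  shows "card (desig N E) = card (components N E)"
proof -
  have g: "is_graph N E" using bf bforest_graph by blast
  have "bij_betw (comp N E) (desig N E) (components N E)"
  proof (rule bij_betw_imageI)
    show "inj_on (comp N E) (desig N E)"
    proof (rule inj_onI)
      fix x y assume x: "x \<in> desig N E" and y: "y \<in> desig N E" and e: "comp N E x = comp N E y"
      have xv: "x \<in> verts N" and yv: "y \<in> verts N" using x y unfolding desig_def by auto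
      have C: "comp N E x \<in> components N E" using comp_in_components[OF xv] .
      have "x \<in> comp N E x" "y \<in> comp N E x" using comp_self xv yv e by auto
      then show "x = y" using desig_unique[OF bf C] x y by blast
    qed
    show "comp N E ` desig N E = components N E"
    proof
      show "comp N E ` desig N E \<subseteq> components N E"
      proof
        fix C assume "C \<in> comp N E ` desig N E"
        then obtain x where "x \<in> desig N E" "C = comp N E x" by blast
        then show "C \<in> components N E" using comp_in_components[of x N E] unfolding desig_def by simp
      qed
      show "components N E \<subseteq> comp N E ` desig N E"
      proof
        fix C assume C: "C \<in> components N E"
        obtain r where r: "r \<in> C" "r \<in> desig N E" using desig_unique[OF bf C] by blast
        have "comp N E r = C" using components_comp[OF g C r(1)] .
        then show "C \<in> comp N E ` desig N E" using r by blast
      qed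
    qed
  qed
  then show ?thesis by (rule bij_betw_same_card)
qed

lemma cut_lemma:
  assumes "(x,z) \<in> R ^^ d" "x \<in> S" "z \<notin> S"
  shows "\<exists>p q d1 d2. p \<in> S \<and> q \<notin> S \<and> (p,q) \<in> R \<and> (x,p) \<in> R ^^ d1 \<and> (q,z) \<in> R ^^ d2 \<and> Suc (d1 + d2) = d"
  using assms
proof (induction d arbitrary: z)
  case 0 then show ?case by simp
next
  case (Suc d)
  from Suc.prems(1) obtain y where xy: "(x,y) \<in> R ^^ d" and yz: "(y,z) \<in> R" by (rule relpow_Suc_E)
  show ?case
  proof (cases "y \<in> S")
    case True
    then show ?thesis using xy yz Suc.prems by fastforce
  next
    case False
    obtain p q d1 d2 where pq: "p \<in> S" "q \<notin> S" "(p,q) \<in> R" "(x,p) \<in> R ^^ d1" "(q,y) \<in> R ^^ d2" "Suc (d1 + d2) = d"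
      using Suc.IH[OF xy Suc.prems(2) False] by blast
    have "(q,z) \<in> R ^^ Suc d2" using pq(5) yz by (rule relpow_Suc_I)
    then show ?thesis using pq by fastforce
  qed
qed


lemma bridge:
  assumes g: "is_graph N E" and t: "\<forall>C\<in>components N E. tree_comp E C" and e: "{y,w} \<in> E"
  shows "w \<notin> comp N (E - {{y,w}}) y"
proof
  assume w: "w \<in> comp N (E - {{y,w}}) y"
  let ?E0 = "E - {{y,w}}"
  have g0: "is_graph N ?E0" by (rule is_graph_mono[OF g]) blast
  have yw: "y \<noteq> w" using adj_edge_ne[OF g e] .
  have "(y,w) \<in> adj E" using adj_iff_g[OF g] e by simp
  then have yv: "y \<in> verts N" and wv: "w \<in> verts N" using adj_verts[OF g] by blast+
  have ins: "insert {y,w} ?E0 = E" using e by blast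
  have "card (components N E) = card (components N ?E0)"
    using card_components_insert[OF g0 yv wv yw] w ins by simp
  moreover have "N \<le> card (components N ?E0) + card ?E0" by (rule components_lower[OF g0])
  moreover have "card E + card (components N E) = N" by (rule forest_card[OF g t])
  moreover have "card ?E0 + 1 = card E" using card_Suc_Diff1[OF is_graph_finite[OF g] e] by simp
  ultimately show False by linarith
qed

locale bfc =
  fixes N :: nat and E :: "nat set set" and C :: "nat set" and r :: nat
  assumes bf: "bforest N E" and C: "C \<in> components N E" and c1: "card C \<noteq> 1"
    and rC: "r \<in> C" and r2: "deg E r = 2"
begin

lemma g: "is_graph N E" using bf bforest_graph by blast

lemma r_unique: "x \<in> C \<Longrightarrow> deg E x = 2 \<Longrightarrow> x = r"
proof -
  assume x: "x \<in> C" "deg E x = 2"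
  obtain z where z: "z \<in> C \<and> deg E z = 2" "\<And>y. y \<in> C \<and> deg E y = 2 \<Longrightarrow> y = z"
    using bf_nontriv(1)[OF bf C c1] by (elim ex1E) blast
  have "x = z" using z(2) x by blast
  moreover have "r = z" using z(2) rC r2 by blast
  ultimately show "x = r" by simp
qed

lemma CV: "C \<subseteq> verts N" using components_sub[OF C] .

lemma compC: "x \<in> C \<Longrightarrow> comp N E x = C" by (rule components_comp[OF g C])

lemma root: "x \<in> C \<Longrightarrow> root_of N E x = r"
proof -
  assume x: "x \<in> C"
  show ?thesis unfolding root_of_def
  proof (rule the_equality)
    show "r \<in> comp N E x \<and> deg E r = 2" using compC[OF x] rC r2 by simp
    show "\<And>z. z \<in> comp N E x \<and> deg E z = 2 \<Longrightarrow> z = r" using compC[OF x] r_unique by simp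
  qed
qed

lemma reach: "x \<in> C \<Longrightarrow> \<exists>d. (r,x) \<in> adj E ^^ d"
proof -
  assume x: "x \<in> C"
  have "x \<in> comp N E r" using compC[OF rC] x by simp
  then have "(r,x) \<in> (adj E)\<^sup>*" by (simp add: comp_mem_iff)
  then show ?thesis by (simp add: rtrancl_power)
qed

lemma h_def: "x \<in> C \<Longrightarrow> height N E x = (LEAST d. (r,x) \<in> adj E ^^ d)"
  unfolding height_def using root by simp

lemma h_reach: "x \<in> C \<Longrightarrow> (r,x) \<in> adj E ^^ height N E x"
proof -
  assume x: "x \<in> C"
  obtain d where "(r,x) \<in> adj E ^^ d" using reach[OF x] by blast
  then have "(r,x) \<in> adj E ^^ (LEAST d. (r,x) \<in> adj E ^^ d)" by (rule LeastI)
  then show ?thesis using h_def[OF x] by simp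
qed

lemma h_le: "x \<in> C \<Longrightarrow> (r,x) \<in> adj E ^^ d \<Longrightarrow> height N E x \<le> d"
proof -
  assume x: "x \<in> C" and d: "(r,x) \<in> adj E ^^ d"
  have "(LEAST d. (r,x) \<in> adj E ^^ d) \<le> d" using d by (rule Least_le)
  then show ?thesis using h_def[OF x] by simp
qed

lemma h0: "x \<in> C \<Longrightarrow> height N E x = 0 \<longleftrightarrow> x = r"
proof
  assume x: "x \<in> C" and "height N E x = 0"
  then show "x = r" using h_reach[OF x] by simp
next
  assume "x \<in> C" "x = r"
  then show "height N E x = 0" using h_le[of x 0] by simp
qed

lemma nbrsC: "x \<in> C \<Longrightarrow> w \<in> nbrs E x \<Longrightarrow> w \<in> C"
proof -
  assume x: "x \<in> C" and w: "w \<in> nbrs E x"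
  have "w \<in> comp N E x" using nbrs_comp[OF g w] .
  then show ?thesis using compC[OF x] by simp
qed

lemma parent: "x \<in> C \<Longrightarrow> x \<noteq> r \<Longrightarrow> \<exists>u\<in>nbrs E x. height N E u < height N E x"
proof -
  assume x: "x \<in> C" and xr: "x \<noteq> r"
  then have "height N E x \<noteq> 0" using h0[OF x] by simp
  then obtain d where d: "height N E x = Suc d" using not0_implies_Suc by blast
  then have "(r,x) \<in> adj E ^^ Suc d" using h_reach[OF x] by simp
  then obtain u where ru: "(r,u) \<in> adj E ^^ d" and ux: "(u,x) \<in> adj E" by (rule relpow_Suc_E)
  have "(x,u) \<in> adj E" using ux by (rule adj_sym)
  then have un: "u \<in> nbrs E x" using nbrs_adj[OF g] by simp
  have "u \<in> C" using nbrsC[OF x un] .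
  then have "height N E u \<le> d" using h_le ru by simp
  then have "height N E u < height N E x" using d by simp
  then show ?thesis using un by blast
qed

lemma adj_nbrs: "(x,w) \<in> adj E \<longleftrightarrow> w \<in> nbrs E x" using nbrs_adj[OF g] by simp

lemma children_root: "children N E r = nbrs E r"
proof
  show "children N E r \<subseteq> nbrs E r" unfolding children_def using adj_nbrs by blast
  show "nbrs E r \<subseteq> children N E r"
  proof
    fix w assume w: "w \<in> nbrs E r"
    have wC: "w \<in> C" using nbrsC[OF rC w] .
    have "w \<noteq> r" using nbrs_verts[OF g w] by blast
    then have "height N E w > 0" using h0[OF wC] by simp
    moreover have "height N E r = 0" using h0[OF rC] by simp
    ultimately show "w \<in> children N E r" unfolding children_def using w adj_nbrs by simp
  qed
qed

lemma tC: "\<forall>D\<in>components N E. tree_comp E D" using bforest_tree[OF bf] by blast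

lemma children_nonroot:
  assumes y: "y \<in> C" and yr: "y \<noteq> r"
  obtains u where "u \<in> nbrs E y" "children N E y = nbrs E y - {u}"
proof -
  obtain u where u: "u \<in> nbrs E y" "height N E u < height N E y" using parent[OF y yr] by blast
  have uC: "u \<in> C" using nbrsC[OF y u(1)] .
  have "children N E y = nbrs E y - {u}"
  proof
    show "children N E y \<subseteq> nbrs E y - {u}" unfolding children_def using adj_nbrs u(2) by auto
    show "nbrs E y - {u} \<subseteq> children N E y"
    proof
      fix w assume w: "w \<in> nbrs E y - {u}"
      have wy: "w \<in> nbrs E y" and wu: "w \<noteq> u" using w by auto
      have wC: "w \<in> C" using nbrsC[OF y wy] .
      have "height N E y < height N E w"
      proof (rule ccontr)
        assume "\<not> height N E y < height N E w"
        then have hw: "height N E w \<le> height N E y" by simp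
        let ?E0 = "E - {{y,w}}"
        let ?S = "comp N ?E0 w"
        have e: "{y,w} \<in> E" using wy unfolding nbrs_def by simp
        have g0: "is_graph N ?E0" using is_graph_mono[OF g] by blast
        have yv: "y \<in> verts N" and wv: "w \<in> verts N" using CV y wC by blast+
        have br: "w \<notin> comp N ?E0 y" using bridge[OF g tC e] .
        have yS: "y \<notin> ?S"
        proof
          assume "y \<in> ?S"
          then have "comp N ?E0 y = ?S" using comp_eq[OF g0] by blast
          then show False using br comp_self[OF wv] by simp
        qed
        have "{y,u} \<in> ?E0" using u(1) wu unfolding nbrs_def by (auto simp: doubleton_eq_iff)
        then have uy0: "u \<in> comp N ?E0 y" using edge_in_comp[OF g0] by blast
        have uS: "u \<notin> ?S"
        proof
          assume "u \<in> ?S"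
          then have "comp N ?E0 u = ?S" using comp_eq[OF g0] by blast
          moreover have "comp N ?E0 u = comp N ?E0 y" using comp_eq[OF g0 uy0] .
          ultimately have "comp N ?E0 y = ?S" by simp
          then show False using yS comp_self[OF yv, of ?E0] by simp
        qed
        have cross: "\<And>p q. (p,q) \<in> adj E \<Longrightarrow> p \<in> ?S \<Longrightarrow> q \<notin> ?S \<Longrightarrow> p = w \<and> q = y"
        proof -
          fix p q assume pq: "(p,q) \<in> adj E" "p \<in> ?S" "q \<notin> ?S"
          have pqE: "{p,q} \<in> E" using pq(1) adj_iff by blast
          show "p = w \<and> q = y"
          proof (cases "{p,q} = {y,w}")
            case True then show ?thesis using pq yS by (auto simp: doubleton_eq_iff)
          next
            case False
            then have "{p,q} \<in> ?E0" using pqE by blast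
            then have "q \<in> comp N ?E0 p" using edge_in_comp[OF g0] by blast
            then have "comp N ?E0 q = comp N ?E0 p" by (rule comp_eq[OF g0])
            moreover have "comp N ?E0 p = ?S" using comp_eq[OF g0 pq(2)] .
            moreover have "q \<in> verts N" using adj_verts[OF g pq(1)] by blast
            ultimately have "q \<in> ?S" using comp_self[of q N ?E0] by simp
            then show ?thesis using pq(3) by blast
          qed
        qed
        show False
        proof (cases "r \<in> ?S")
          case True
          obtain p q d1 d2 where pq: "p \<in> ?S" "q \<notin> ?S" "(p,q) \<in> adj E" "(r,p) \<in> adj E ^^ d1"
              "(q,u) \<in> adj E ^^ d2" "Suc (d1 + d2) = height N E u"
            using cut_lemma[OF h_reach[OF uC] True uS] by blast
          have "p = w \<and> q = y" using cross[OF pq(3) pq(1) pq(2)] .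
          then have "(r,y) \<in> adj E ^^ Suc d1" using relpow_Suc_I[OF pq(4) pq(3)] by simp
          then have "height N E y \<le> Suc d1" using h_le[OF y] by blast
          then show False using pq(6) u(2) by linarith
        next
          case False
          have wS: "w \<in> ?S" using comp_self[OF wv] .
          obtain p q d1 d2 where pq: "p \<in> - ?S" "q \<notin> - ?S" "(p,q) \<in> adj E" "(r,p) \<in> adj E ^^ d1"
              "(q,w) \<in> adj E ^^ d2" "Suc (d1 + d2) = height N E w"
          proof -
            have "r \<in> - ?S" "w \<notin> - ?S" using False wS by auto
            from cut_lemma[OF h_reach[OF wC] this] show ?thesis using that by blast
          qed
          have "(q,p) \<in> adj E" using pq(3) by (rule adj_sym)
          moreover have "q \<in> ?S" "p \<notin> ?S" using pq(1,2) by auto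
          ultimately have "q = w \<and> p = y" using cross by blast
          then have "height N E y \<le> d1" using h_le[OF y] pq(4) by blast
          then show False using pq(6) hw by linarith
        qed
      qed
      then show "w \<in> children N E y" unfolding children_def using wy adj_nbrs by simp
    qed
  qed
  then show ?thesis using that u(1) by blast
qed

lemma children_card:
  assumes y: "y \<in> C" and int: "1 < deg E y"
  shows "card (children N E y) = 2" and "children N E y \<subseteq> nbrs E y"
proof -
  have cases: "deg E y = 2 \<or> deg E y = 3"
    using bf_nontriv(2)[OF bf C c1 y] int by auto
  have "card (children N E y) = 2 \<and> children N E y \<subseteq> nbrs E y"
  proof (cases "y = r")
    case True
    then show ?thesis using children_root r2 deg_nbrs[OF g] by simp
  next
    case False
    then have "deg E y = 3" using cases r_unique y by blast
    obtain u where u: "u \<in> nbrs E y" "children N E y = nbrs E y - {u}" using children_nonroot[OF y False] by blast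
    have "card (nbrs E y) = 3" using \<open>deg E y = 3\<close> deg_nbrs[OF g] by simp
    then show ?thesis using u nbrs_finite[OF g] by (simp add: card_Diff_singleton)
  qed
  then show "card (children N E y) = 2" and "children N E y \<subseteq> nbrs E y" by auto
qed

end


lemma tree_comp_iff: "tree_comp E C \<longleftrightarrow> card (edges_in E C) = card C - 1"
  unfolding tree_comp_def edges_in_def by simp

lemma bin_cong:
  assumes "binary_tree_comp E C" "edges_in E' C = edges_in E C" "\<And>u. u \<in> C \<Longrightarrow> deg E' u = deg E u"
  shows "binary_tree_comp E' C"
proof -
  have t: "tree_comp E' C" using assms(1,2) unfolding binary_tree_comp_def tree_comp_iff by simp
  have "card C = 1 \<or> ((\<exists>!r. r \<in> C \<and> deg E r = 2) \<and> (\<forall>u \<in> C. deg E u \<noteq> 2 \<longrightarrow> deg E u = 3 \<or> deg E u = 1))"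
    using assms(1) unfolding binary_tree_comp_def by blast
  moreover have "(\<exists>!r. r \<in> C \<and> deg E r = 2) \<longleftrightarrow> (\<exists>!r. r \<in> C \<and> deg E' r = 2)"
    using assms(3) by metis
  moreover have "(\<forall>u \<in> C. deg E u \<noteq> 2 \<longrightarrow> deg E u = 3 \<or> deg E u = 1) \<longleftrightarrow> (\<forall>u \<in> C. deg E' u \<noteq> 2 \<longrightarrow> deg E' u = 3 \<or> deg E' u = 1)"
    using assms(3) by simp
  ultimately show ?thesis using t unfolding binary_tree_comp_def by simp
qed

lemma comp_finite: "finite (comp N E u)" using finite_subset[OF comp_sub verts_finite] .

context glue
begin

lemma swap: "glue N E v b a"
proof
  show "is_graph N E" "v \<in> verts N" "b \<in> verts N" "a \<in> verts N" "b \<notin> Cv" "a \<notin> Cv" "a \<notin> Cb"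
    using g v a b bv av notin by auto
qed

lemma E2_comm: "insert {v,b} (insert {v,a} E) = E2" by (simp add: insert_commute)

lemma new_notin: "{v,a} \<notin> E" "{v,b} \<notin> E"
proof -
  show "{v,a} \<notin> E" using edge_in_comp[OF g, of v a] notin(4) by auto
  show "{v,b} \<notin> E" using edge_in_comp[OF g, of v b] notin(5) by auto
qed

lemma newset: "{{v,w} | w. w \<in> {a,b}} = {{v,a},{v,b}}" by blast

lemma E2_eq: "E \<union> {{v,w} | w. w \<in> {a,b}} = E2" unfolding newset by blast

lemma E2_minus: "E2 - {{v,w} | w. w \<in> {a,b}} = E" unfolding newset using new_notin by blast

lemma card_U: "card U = card Cv + card Ca + card Cb"
  using disj comp_finite by (simp add: card_Un_disjoint Int_Un_distrib2)

lemma cross_a: "(p,q) \<in> adj E2 \<Longrightarrow> p \<in> Ca \<Longrightarrow> q \<notin> Ca \<Longrightarrow> p = a \<and> q = v"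
proof -
  assume pq: "(p,q) \<in> adj E2" "p \<in> Ca" "q \<notin> Ca"
  have e: "{p,q} \<in> E2" using pq(1) adj_iff by simp
  show "p = a \<and> q = v"
  proof (cases "{p,q} \<in> E")
    case True
    then have "q \<in> comp N E p" by (rule edge_in_comp[OF g])
    moreover have "comp N E p = Ca" using comp_eq[OF g pq(2)] .
    ultimately show ?thesis using pq(3) by simp
  next
    case False
    then have "{p,q} = {v,a} \<or> {p,q} = {v,b}" using e by blast
    moreover have "v \<notin> Ca" "b \<notin> Ca" using notin by auto
    ultimately show ?thesis using pq(2,3) aa unfolding doubleton_eq_iff by blast
  qed
qed

lemma cross_v: "(p,q) \<in> adj E2 \<Longrightarrow> p \<in> Cv \<Longrightarrow> q \<notin> Cv \<Longrightarrow> p = v"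
proof -
  assume pq: "(p,q) \<in> adj E2" "p \<in> Cv" "q \<notin> Cv"
  have e: "{p,q} \<in> E2" using pq(1) adj_iff by simp
  show "p = v"
  proof (cases "{p,q} \<in> E")
    case True
    then have "q \<in> comp N E p" by (rule edge_in_comp[OF g])
    moreover have "comp N E p = Cv" using comp_eq[OF g pq(2)] .
    ultimately show ?thesis using pq(3) by simp
  next
    case False
    then have "{p,q} = {v,a} \<or> {p,q} = {v,b}" using e by blast
    moreover have "a \<notin> Cv" "b \<notin> Cv" using notin by auto
    ultimately show ?thesis using pq(2,3) unfolding doubleton_eq_iff by blast
  qed
qed

lemma U_comp2: "U \<in> components N E2"
  using components2 by simp

lemma card_U_ge: "card U \<noteq> 1"
proof -
  have "{v,a,b} \<subseteq> U" using vv aa bb by blast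
  then have "card {v,a,b} \<le> card U" using comp_finite by (intro card_mono) auto
  then show ?thesis using ne by simp
qed

lemma h_va:
  assumes bfc: "bfc N E2 U rr" and rrv: "rr \<in> Cv" and x: "x = a \<or> x = b"
  shows "height N E2 v < height N E2 x"
proof -
  have xU: "x \<in> U" using x aa bb by blast
  have xv: "x \<notin> Cv" using x notin by blast
  obtain p q d1 d2 where pq: "p \<in> Cv" "q \<notin> Cv" "(p,q) \<in> adj E2" "(rr,p) \<in> adj E2 ^^ d1"
      "(q,x) \<in> adj E2 ^^ d2" "Suc (d1 + d2) = height N E2 x"
    using cut_lemma[OF bfc.h_reach[OF bfc xU] rrv xv] by blast
  have "p = v" using cross_v[OF pq(3) pq(1) pq(2)] .
  then have "height N E2 v \<le> d1" using bfc.h_le[OF bfc, of v d1] vv pq(4) by simp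
  then show ?thesis using pq(6) by linarith
qed

lemma h_av:
  assumes bfc: "bfc N E2 U rr" and rra: "rr \<in> Ca"
  shows "height N E2 a < height N E2 v"
proof -
  have vU: "v \<in> U" using vv by blast
  have va: "v \<notin> Ca" using notin by blast
  obtain p q d1 d2 where pq: "p \<in> Ca" "q \<notin> Ca" "(p,q) \<in> adj E2" "(rr,p) \<in> adj E2 ^^ d1"
      "(q,v) \<in> adj E2 ^^ d2" "Suc (d1 + d2) = height N E2 v"
    using cut_lemma[OF bfc.h_reach[OF bfc vU] rra va] by blast
  have "p = a" using cross_a[OF pq(3) pq(1) pq(2)] by blast
  then have "height N E2 a \<le> d1" using bfc.h_le[OF bfc, of a d1] aa pq(4) by simp
  then show ?thesis using pq(6) by linarith
qed

end


locale glueA = glue +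
  assumes bf: "bforest N E" and dv: "deg E v \<le> 1" and da: "a \<in> desig N E" and db: "b \<in> desig N E"
begin

lemma swapA: "glueA N E v b a"
  using swap bf dv da db unfolding glueA_def glueA_axioms_def by simp

lemma compsE: "Cv \<in> components N E" "Ca \<in> components N E" "Cb \<in> components N E"
  using comp_in_components v a b by auto

lemma nz: "X \<in> components N E \<Longrightarrow> card X \<noteq> 1 \<Longrightarrow> x \<in> X \<Longrightarrow> deg E x \<noteq> 0"
proof -
  assume X: "X \<in> components N E" "card X \<noteq> 1" "x \<in> X"
  have "nbrs E x \<noteq> {}" using bf_nontriv_deg[OF g X] .
  then show "deg E x \<noteq> 0" using deg_nbrs[OF g] nbrs_finite[OF g] by simp
qed

lemma two_card: "x \<in> X \<Longrightarrow> y \<in> X \<Longrightarrow> x \<noteq> y \<Longrightarrow> finite X \<Longrightarrow> card X \<noteq> 1"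
proof -
  assume "x \<in> X" "y \<in> X" "x \<noteq> y" "finite X"
  then have "card {x,y} \<le> card X" by (intro card_mono) auto
  then show "card X \<noteq> 1" using \<open>x \<noteq> y\<close> by simp
qed

lemma piece_a: "x \<in> Ca \<Longrightarrow> x \<noteq> a \<Longrightarrow> deg E x = 1 \<or> deg E x = 3"
proof -
  assume x: "x \<in> Ca" "x \<noteq> a"
  have c1: "card Ca \<noteq> 1" using two_card[OF x(1) aa x(2) comp_finite] .
  have xv: "x \<in> verts N" using subsetD[OF comp_sub x(1)] .
  have "deg E x \<noteq> 2"
  proof
    assume "deg E x = 2"
    then have xd: "x \<in> desig N E" using xv unfolding desig_def by simp
    obtain z where z: "\<And>y. y \<in> Ca \<and> y \<in> desig N E \<Longrightarrow> y = z"
      using desig_unique[OF bf compsE(2)] by (elim ex1E) blast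
    have "x = z" using z x(1) xd by blast
    moreover have "a = z" using z aa da by blast
    ultimately show False using x(2) by simp
  qed
  then show ?thesis using bf_nontriv(2)[OF bf compsE(2) c1 x(1)] by auto
qed

lemma deg2a: "deg E2 a = 1 \<or> deg E2 a = 3"
  using deg2_a da unfolding desig_def by auto

definition rr where "rr = (THE r. r \<in> Cv \<and> r \<in> desig N E)"

lemma rr: "rr \<in> Cv" "rr \<in> desig N E" "\<And>x. x \<in> Cv \<Longrightarrow> x \<in> desig N E \<Longrightarrow> x = rr"
proof -
  have u: "\<exists>!r. r \<in> Cv \<and> r \<in> desig N E" using desig_unique[OF bf compsE(1)] .
  then have "rr \<in> Cv \<and> rr \<in> desig N E" unfolding rr_def by (rule theI')
  then show "rr \<in> Cv" "rr \<in> desig N E" by auto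
  show "\<And>x. x \<in> Cv \<Longrightarrow> x \<in> desig N E \<Longrightarrow> x = rr"
  proof -
    fix x assume x: "x \<in> Cv" "x \<in> desig N E"
    obtain z where z: "\<And>y. y \<in> Cv \<and> y \<in> desig N E \<Longrightarrow> y = z"
      using u by (elim ex1E) blast
    have "x = z" using z x by blast
    moreover have "rr = z" using z \<open>rr \<in> Cv \<and> rr \<in> desig N E\<close> by blast
    ultimately show "x = rr" by simp
  qed
qed

lemma piece_v: "x \<in> Cv \<Longrightarrow> x \<noteq> v \<Longrightarrow> (deg E x = 2 \<longleftrightarrow> x = rr) \<and> (deg E x \<noteq> 2 \<longrightarrow> deg E x = 1 \<or> deg E x = 3)"
proof -
  assume x: "x \<in> Cv" "x \<noteq> v"
  have c1: "card Cv \<noteq> 1" using two_card[OF x(1) vv x(2) comp_finite] .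
  have xv: "x \<in> verts N" using subsetD[OF comp_sub x(1)] .
  have n0: "deg E x \<noteq> 0" using nz[OF compsE(1) c1 x(1)] .
  have "deg E x = 2 \<longleftrightarrow> x \<in> desig N E" using xv n0 unfolding desig_def by auto
  also have "\<dots> \<longleftrightarrow> x = rr" using rr(3)[OF x(1)] rr(2) by blast
  finally show ?thesis using bf_nontriv(2)[OF bf compsE(1) c1 x(1)] by auto
qed

lemma v_rr: "(deg E v = 0 \<longrightarrow> rr = v) \<and> (deg E v = 1 \<longrightarrow> rr \<noteq> v)"
proof
  show "deg E v = 0 \<longrightarrow> rr = v"
  proof
    assume "deg E v = 0"
    then have "v \<in> desig N E" using v unfolding desig_def by simp
    then show "rr = v" using rr(3)[OF vv] by simp
  qed
  show "deg E v = 1 \<longrightarrow> rr \<noteq> v" using rr(2) unfolding desig_def by auto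
qed

lemma U_deg: "x \<in> U \<Longrightarrow> (deg E2 x = 2 \<longleftrightarrow> x = rr) \<and> (deg E2 x \<noteq> 2 \<longrightarrow> deg E2 x = 1 \<or> deg E2 x = 3)"
proof -
  assume x: "x \<in> U"
  have rrU: "rr \<notin> Ca" "rr \<notin> Cb" using rr(1) disj by blast+
  consider (v) "x = v" | (a) "x = a" | (b) "x = b" | (cv) "x \<in> Cv" "x \<noteq> v" | (ca) "x \<in> Ca" "x \<noteq> a" | (cb) "x \<in> Cb" "x \<noteq> b"
    using x by blast
  then show ?thesis
  proof cases
    case v
    then show ?thesis using deg2_v dv v_rr by auto
  next
    case a
    then show ?thesis using deg2a rrU aa by auto
  next
    case b
    then show ?thesis using glueA.deg2a[OF swapA] E2_comm rrU bb by auto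
  next
    case cv
    have "x \<noteq> a" "x \<noteq> b" using cv notin by blast+
    then have "deg E2 x = deg E x" using deg2_other[OF cv(2)] by simp
    then show ?thesis using piece_v[OF cv] by simp
  next
    case ca
    have "x \<noteq> v" "x \<noteq> b" "x \<noteq> rr" using ca notin rrU by blast+
    then have "deg E2 x = deg E x" using deg2_other ca(2) by simp
    then show ?thesis using piece_a[OF ca] \<open>x \<noteq> rr\<close> by auto
  next
    case cb
    have "x \<noteq> v" "x \<noteq> a" "x \<noteq> rr" using cb notin rrU by blast+
    then have "deg E2 x = deg E x" using deg2_other cb(2) by simp
    then show ?thesis using glueA.piece_a[OF swapA cb] \<open>x \<noteq> rr\<close> by auto
  qed
qed

lemma tree_U: "tree_comp E2 U"
proof -
  have t: "card (edges_in E X) = card X - 1" if "X \<in> components N E" for X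
    using bforest_tree[OF bf that] tree_comp_iff by blast
  have p: "card X \<ge> 1" if "X \<in> components N E" for X
  proof -
    have "finite X" using finite_subset[OF components_sub[OF that] verts_finite] .
    then show ?thesis using components_nonempty[OF that] by (simp add: Suc_leI card_gt_0_iff)
  qed
  show ?thesis unfolding tree_comp_iff edges2_U card_U
    using t[OF compsE(1)] t[OF compsE(2)] t[OF compsE(3)] p[OF compsE(1)] p[OF compsE(2)] p[OF compsE(3)] by simp
qed

lemma bin_U: "binary_tree_comp E2 U"
proof -
  have rrU: "rr \<in> U" using rr(1) by blast
  have "\<exists>!r. r \<in> U \<and> deg E2 r = 2" using U_deg rrU by blast
  moreover have "\<forall>u\<in>U. deg E2 u \<noteq> 2 \<longrightarrow> deg E2 u = 3 \<or> deg E2 u = 1" using U_deg by blast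
  ultimately show ?thesis unfolding binary_tree_comp_def using tree_U by blast
qed

lemma bf2: "bforest N E2"
  unfolding bforest_def
proof (intro conjI ballI)
  show "is_graph N E2" by (rule g2)
  fix C assume C: "C \<in> components N E2"
  show "binary_tree_comp E2 C"
  proof (cases "C = U")
    case True then show ?thesis using bin_U by simp
  next
    case False
    then have C1: "C \<in> components N E" "C \<noteq> Cv" "C \<noteq> Ca" "C \<noteq> Cb" using C components2 by auto
    have dj: "C \<inter> U = {}" using comp_cases[OF C1] .
    have "binary_tree_comp E C" using bf C1(1) unfolding bforest_def by blast
    moreover have "edges_in E2 C = edges_in E C" using edges2_other[OF C1] .
    moreover have "\<And>u. u \<in> C \<Longrightarrow> deg E2 u = deg E u"
    proof -
      fix u assume "u \<in> C"
      then have "u \<noteq> v" "u \<noteq> a" "u \<noteq> b" using dj vv aa bb by blast+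
      then show "deg E2 u = deg E u" by (rule deg2_other)
    qed
    ultimately show ?thesis by (rule bin_cong)
  qed
qed

lemma bfc2: "bfc N E2 U rr"
proof
  show "bforest N E2" by (rule bf2)
  show "U \<in> components N E2" by (rule U_comp2)
  show "card U \<noteq> 1" by (rule card_U_ge)
  show "rr \<in> U" using rr(1) by blast
  show "deg E2 rr = 2" using U_deg rr(1) by blast
qed

lemma children2: "children N E2 v = {a,b}"
proof -
  have vU: "v \<in> U" using vv by blast
  have int: "1 < deg E2 v" using deg2_v by simp
  have c2: "card (children N E2 v) = 2" using bfc.children_card(1)[OF bfc2 vU int] .
  have sub: "{a,b} \<subseteq> children N E2 v"
  proof -
    have "height N E2 v < height N E2 a" "height N E2 v < height N E2 b"
      using h_va[OF bfc2 rr(1)] by auto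
    moreover have "(v,a) \<in> adj E2" "(v,b) \<in> adj E2" using adj_iff ne by auto
    ultimately show ?thesis unfolding children_def by blast
  qed
  have "finite (children N E2 v)" using c2 card_gt_0_iff[of "children N E2 v"] by simp
  then show ?thesis using card_subset_eq[OF _ sub] c2 ne by simp
qed

end


locale glueB = glue +
  fixes rr :: nat
  assumes bf2: "bforest N E2" and rrv: "rr \<in> Cv" and rr2: "deg E2 rr = 2"
begin

lemma swapB: "glueB N E v b a rr"
proof -
  have "bforest N (insert {v,b} (insert {v,a} E))" using bf2 E2_comm by simp
  then show ?thesis using swap rrv rr2 E2_comm unfolding glueB_def glueB_axioms_def by simp
qed

lemma bfcB: "bfc N E2 U rr"
proof
  show "bforest N E2" by (rule bf2)
  show "U \<in> components N E2" by (rule U_comp2)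
  show "card U \<noteq> 1" by (rule card_U_ge)
  show "rr \<in> U" using rrv by blast
  show "deg E2 rr = 2" by (rule rr2)
qed

lemma rr_ne: "rr \<noteq> a" "rr \<noteq> b" using rrv notin by blast+

lemma U_degs: "x \<in> U \<Longrightarrow> deg E2 x \<noteq> 2 \<Longrightarrow> deg E2 x = 1 \<or> deg E2 x = 3"
  using bf_nontriv(2)[OF bf2 U_comp2 card_U_ge] by auto

lemma U_deg2: "x \<in> U \<Longrightarrow> deg E2 x = 2 \<Longrightarrow> x = rr"
  using bfc.r_unique[OF bfcB] by blast

lemma deg_a_E: "deg E a = 0 \<or> deg E a = 2"
proof -
  have aU: "a \<in> U" using aa by blast
  have "deg E2 a \<noteq> 2" using U_deg2[OF aU] rr_ne by blast
  then have "deg E2 a = 1 \<or> deg E2 a = 3" using U_degs[OF aU] by blast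
  then show ?thesis using deg2_a by auto
qed

lemma g0: "is_graph N E" by (rule g)

lemma bin_Ca:
  assumes t: "tree_comp E Ca"
  shows "binary_tree_comp E Ca"
proof (cases "deg E a = 0")
  case True
  then have "nbrs E a = {}" using deg_nbrs[OF g] nbrs_finite[OF g] by simp
  then have "Ca = {a}" using comp_isolated[OF g a] by simp
  then show ?thesis using t unfolding binary_tree_comp_def by simp
next
  case False
  then have a2: "deg E a = 2" using deg_a_E by auto
  then have "nbrs E a \<noteq> {}" using deg_nbrs[OF g] by auto
  then obtain w where w: "w \<in> nbrs E a" by blast
  have wa: "w \<in> Ca" "w \<noteq> a" using nbrs_comp[OF g w] nbrs_verts[OF g w] by auto
  have c1: "card Ca \<noteq> 1"
  proof -
    have "card {a,w} \<le> card Ca" using wa aa comp_finite by (intro card_mono) auto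
    then show ?thesis using wa by auto
  qed
  have oth: "x \<in> Ca \<Longrightarrow> x \<noteq> a \<Longrightarrow> deg E x = deg E2 x \<and> x \<noteq> rr \<and> x \<in> U" for x
  proof -
    assume x: "x \<in> Ca" "x \<noteq> a"
    have "x \<noteq> v" "x \<noteq> b" using x notin by blast+
    then have "deg E2 x = deg E x" using deg2_other x(2) by simp
    moreover have "x \<noteq> rr" using x disj rrv by blast
    ultimately show ?thesis using x by simp
  qed
  have u: "\<exists>!r. r \<in> Ca \<and> deg E r = 2"
  proof
    show "a \<in> Ca \<and> deg E a = 2" using aa a2 by simp
    fix x assume x: "x \<in> Ca \<and> deg E x = 2"
    show "x = a"
    proof (rule ccontr)
      assume "x \<noteq> a"
      then have "deg E2 x = 2" "x \<noteq> rr" "x \<in> U" using oth x by auto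
      then show False using U_deg2 by blast
    qed
  qed
  have o: "\<forall>u\<in>Ca. deg E u \<noteq> 2 \<longrightarrow> deg E u = 3 \<or> deg E u = 1"
  proof (intro ballI impI)
    fix x assume x: "x \<in> Ca" "deg E x \<noteq> 2"
    then have "x \<noteq> a" using a2 by auto
    then have "deg E x = deg E2 x" "x \<in> U" using oth x(1) by auto
    then show "deg E x = 3 \<or> deg E x = 1" using U_degs x(2) by auto
  qed
  show ?thesis unfolding binary_tree_comp_def using t u o c1 by blast
qed

end


context glueB
begin

lemma bin_Cv:
  assumes t: "tree_comp E Cv"
  shows "binary_tree_comp E Cv"
proof (cases "v = rr")
  case True
  then have "deg E2 v = 2" using rr2 by simp
  then have "deg E v = 0" using deg2_v by simp
  then have "nbrs E v = {}" using deg_nbrs[OF g] nbrs_finite[OF g] by simp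
  then have "Cv = {v}" using comp_isolated[OF g v] by simp
  then show ?thesis using t unfolding binary_tree_comp_def by simp
next
  case False
  have vU: "v \<in> U" using vv by blast
  have "deg E2 v \<noteq> 2" using U_deg2[OF vU] False by blast
  then have "deg E2 v = 1 \<or> deg E2 v = 3" using U_degs[OF vU] by blast
  then have dv1: "deg E v = 1" using deg2_v by auto
  have c1: "card Cv \<noteq> 1"
  proof -
    have "card {v,rr} \<le> card Cv" using vv rrv comp_finite by (intro card_mono) auto
    then show ?thesis using False by auto
  qed
  have oth: "x \<in> Cv \<Longrightarrow> x \<noteq> v \<Longrightarrow> deg E x = deg E2 x \<and> x \<in> U" for x
  proof -
    assume x: "x \<in> Cv" "x \<noteq> v"
    have "x \<noteq> a" "x \<noteq> b" using x notin by blast+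
    then have "deg E2 x = deg E x" using deg2_other x(2) by simp
    then show ?thesis using x by simp
  qed
  have u: "\<exists>!r. r \<in> Cv \<and> deg E r = 2"
  proof
    have "rr \<noteq> v" using False by simp
    then show "rr \<in> Cv \<and> deg E rr = 2" using oth[OF rrv] rr2 rrv by simp
    fix x assume x: "x \<in> Cv \<and> deg E x = 2"
    then have "x \<noteq> v" using dv1 by auto
    then have "deg E2 x = 2" "x \<in> U" using oth x by auto
    then show "x = rr" using U_deg2 by blast
  qed
  have o: "\<forall>u\<in>Cv. deg E u \<noteq> 2 \<longrightarrow> deg E u = 3 \<or> deg E u = 1"
  proof (intro ballI impI)
    fix x assume x: "x \<in> Cv" "deg E x \<noteq> 2"
    show "deg E x = 3 \<or> deg E x = 1"
    proof (cases "x = v")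
      case True then show ?thesis using dv1 by simp
    next
      case False
      then have "deg E x = deg E2 x" "x \<in> U" using oth x(1) by auto
      then show ?thesis using U_degs x(2) by auto
    qed
  qed
  show ?thesis unfolding binary_tree_comp_def using t u o c1 by blast
qed

lemma trees3: "tree_comp E Cv \<and> tree_comp E Ca \<and> tree_comp E Cb"
proof -
  have tU: "card (edges_in E2 U) = card U - 1"
    using bforest_tree[OF bf2 U_comp2] tree_comp_iff by blast
  have cs: "Cv \<in> components N E" "Ca \<in> components N E" "Cb \<in> components N E"
    using comp_in_components v a b by auto
  have l: "card Cv \<le> card (edges_in E Cv) + 1" "card Ca \<le> card (edges_in E Ca) + 1" "card Cb \<le> card (edges_in E Cb) + 1"
    using comp_lower[OF g cs(1)] comp_lower[OF g cs(2)] comp_lower[OF g cs(3)] by auto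
  have p: "card Cv \<ge> 1" "card Ca \<ge> 1" "card Cb \<ge> 1"
  proof -
    have "card Cv > 0" "card Ca > 0" "card Cb > 0" using vv aa bb comp_finite[of N E] card_gt_0_iff by blast+
    then show "card Cv \<ge> 1" "card Ca \<ge> 1" "card Cb \<ge> 1" by auto
  qed
  have "card (edges_in E Cv) = card Cv - 1" "card (edges_in E Ca) = card Ca - 1" "card (edges_in E Cb) = card Cb - 1"
    using tU edges2_U card_U l p by linarith+
  then show ?thesis unfolding tree_comp_iff by simp
qed

lemma bfE: "bforest N E"
  unfolding bforest_def
proof (intro conjI ballI)
  show "is_graph N E" by (rule g)
  fix X assume X: "X \<in> components N E"
  have t3: "tree_comp E Cv" "tree_comp E Ca" "tree_comp E Cb" using trees3 by auto
  consider "X = Cv" | "X = Ca" | "X = Cb" | "X \<noteq> Cv" "X \<noteq> Ca" "X \<noteq> Cb" by blast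
  then show "binary_tree_comp E X"
  proof cases
    case 1 then show ?thesis using bin_Cv t3 by simp
  next
    case 2 then show ?thesis using bin_Ca t3 by simp
  next
    case 3
    have "tree_comp E (comp N E b)" using t3 by simp
    then have "binary_tree_comp E (comp N E b)" using glueB.bin_Ca[OF swapB] by simp
    then show ?thesis using 3 by simp
  next
    case 4
    have X2: "X \<in> components N E2" using X 4 components2 by simp
    have dj: "X \<inter> U = {}" using comp_cases[OF X 4] .
    have "binary_tree_comp E2 X" using bf2 X2 unfolding bforest_def by blast
    moreover have "edges_in E X = edges_in E2 X" using edges2_other[OF X 4] by simp
    moreover have "\<And>u. u \<in> X \<Longrightarrow> deg E u = deg E2 u"
    proof -
      fix u assume "u \<in> X"
      then have "u \<noteq> v" "u \<noteq> a" "u \<noteq> b" using dj vv aa bb by blast+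
      then show "deg E u = deg E2 u" using deg2_other by simp
    qed
    ultimately show ?thesis by (rule bin_cong)
  qed
qed

end

lemma decompose:
  assumes bf': "bforest N E'" and v: "v \<in> verts N" and int: "1 < deg E' v"
  obtains a b where "a \<noteq> b" "children N E' v = {a,b}" "glueA N (E' - {{v,a},{v,b}}) v a b"
    "insert {v,a} (insert {v,b} (E' - {{v,a},{v,b}})) = E'"
    "card (components N (E' - {{v,a},{v,b}})) = card (components N E') + 2"
proof -
  have g': "is_graph N E'" using bf' by (rule bforest_graph)
  let ?C = "comp N E' v"
  have C: "?C \<in> components N E'" using comp_in_components[OF v] .
  have vC: "v \<in> ?C" using comp_self[OF v] .
  have "nbrs E' v \<noteq> {}" using int deg_nbrs[OF g'] by auto
  then obtain w where w: "w \<in> nbrs E' v" by blast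
  have wC: "w \<in> ?C" "w \<noteq> v" using nbrs_comp[OF g' w] nbrs_verts[OF g' w] by auto
  have c1: "card ?C \<noteq> 1"
  proof -
    have "card {v,w} \<le> card ?C" using wC vC comp_finite by (intro card_mono) auto
    then show ?thesis using wC by auto
  qed
  obtain r where r: "r \<in> ?C" "deg E' r = 2" using bf_nontriv(1)[OF bf' C c1] by blast
  have bfc: "bfc N E' ?C r" using bf' C c1 r by (unfold_locales) auto
  have ch2: "card (children N E' v) = 2" and chs: "children N E' v \<subseteq> nbrs E' v"
    using bfc.children_card[OF bfc vC int] by auto
  obtain a b where ab0: "children N E' v = {a,b}" "a \<noteq> b" using ch2 unfolding card_2_iff by blast
  then have ab: "a \<noteq> b" "children N E' v = {a,b}" by auto
  have an: "a \<in> nbrs E' v" and bn: "b \<in> nbrs E' v" using chs ab by auto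
  have av: "a \<in> verts N" "a \<noteq> v" and bv: "b \<in> verts N" "b \<noteq> v"
    using nbrs_verts[OF g' an] nbrs_verts[OF g' bn] by auto
  have eva: "{v,a} \<in> E'" and evb: "{v,b} \<in> E'" using an bn unfolding nbrs_def by auto
  define E where "E = E' - {{v,a},{v,b}}"
  have g: "is_graph N E" unfolding E_def by (rule is_graph_mono[OF g']) blast
  have ins: "insert {v,a} (insert {v,b} E) = E'" unfolding E_def using eva evb by blast
  have neq: "{v,a} \<noteq> {v,b}" using ab by (auto simp: doubleton_eq_iff)
  have fE': "finite E'" using is_graph_finite[OF g'] .
  have cardE: "card E + 2 = card E'"
  proof -
    have "card E = card E' - card {{v,a},{v,b}}" unfolding E_def
      using eva evb fE' by (intro card_Diff_subset) auto
    moreover have "card {{v,a},{v,b}} = 2" using neq by simp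
    moreover have "card {{v,a},{v,b}} \<le> card E'" using eva evb fE' by (intro card_mono) auto
    ultimately show ?thesis by simp
  qed
  have low: "N \<le> card (components N E) + card E" by (rule components_lower[OF g])
  have eq': "card E' + card (components N E') = N" by (rule bforest_card[OF bf'])
  let ?E1 = "insert {v,b} E"
  have g1: "is_graph N ?E1" using is_graph_insert[OF g v bv(1)] bv by simp
  have c1eq: "card (components N ?E1) = (if b \<in> comp N E v then card (components N E) else card (components N E) - 1)"
    using card_components_insert[OF g v bv(1)] bv by simp
  have c2eq: "card (components N E') = (if a \<in> comp N ?E1 v then card (components N ?E1) else card (components N ?E1) - 1)"
    using card_components_insert[OF g1 v av(1)] av ins by simp
  have nb: "b \<notin> comp N E v" and na1: "a \<notin> comp N ?E1 v"
    using c1eq c2eq low eq' cardE by (auto split: if_splits)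
  have comp1v: "comp N ?E1 v = comp N E v \<union> comp N E b"
    using comp_insert[OF g v bv(1)] bv comp_self[OF v] by simp
  have na: "a \<notin> comp N E v" using na1 comp1v by blast
  have nba: "b \<notin> comp N E a"
  proof
    assume "b \<in> comp N E a"
    then have "comp N E b = comp N E a" by (rule comp_eq[OF g])
    then have "a \<in> comp N E b" using comp_self[OF av(1)] by simp
    then show False using na1 comp1v by blast
  qed
  have gl: "glue N E v a b" using g v av(1) bv(1) na nb nba by (unfold_locales) auto
  have E2: "glue.E2 E v a b = E'" using ins by simp
  have CU: "?C = glue.U N E v a b" using glue.comp2[OF gl, of v] ins comp_self[OF v] by simp
  have bfcU: "bfc N E' (glue.U N E v a b) r" using bfc CU by simp
  have hva: "height N E' v < height N E' a" "height N E' v < height N E' b"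
    using ab(2) unfolding children_def by auto
  have rU: "r \<in> glue.U N E v a b" using r(1) CU by simp
  have rna: "r \<notin> comp N E a"
  proof
    assume "r \<in> comp N E a"
    then have "height N E' a < height N E' v" using glue.h_av[OF gl] bfcU ins by simp
    then show False using hva by simp
  qed
  have rnb: "r \<notin> comp N E b"
  proof
    assume "r \<in> comp N E b"
    moreover have "bfc N (insert {v,a} (insert {v,b} E)) (comp N E v \<union> comp N E b \<union> comp N E a) r"
      using bfcU ins by (simp add: Un_ac)
    ultimately have "height N (insert {v,a} (insert {v,b} E)) b < height N (insert {v,a} (insert {v,b} E)) v"
      using glue.h_av[OF glue.swap[OF gl]] glue.E2_comm[OF gl] by simp
    then show False using hva ins by simp
  qed
  have rv: "r \<in> comp N E v" using rU rna rnb by blast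
  have gB: "glueB N E v a b r" using gl bf' rv r(2) ins unfolding glueB_def glueB_axioms_def by simp
  have dv: "deg E v \<le> 1"
  proof -
    have "deg E' v = deg E v + 2" using glue.deg2_v[OF gl] ins by simp
    moreover have "deg E' v = 2 \<or> deg E' v = 3"
      using bf_nontriv(2)[OF bf' C c1 vC] int by auto
    ultimately show ?thesis by auto
  qed
  have da: "a \<in> desig N E" using glueB.deg_a_E[OF gB] av unfolding desig_def by auto
  have db: "b \<in> desig N E" using glueB.deg_a_E[OF glueB.swapB[OF gB]] bv unfolding desig_def by auto
  have cc: "card (components N E') + 2 = card (components N E)" using glue.card_components2[OF gl] ins by simp
  have bfE: "bforest N E" using glueB.bfE[OF gB] .
  have gA: "glueA N E v a b" using gl bfE dv da db unfolding glueA_def glueA_axioms_def by simp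
  show ?thesis using that[OF ab(1) ab(2)] gA ins cc unfolding E_def by simp
qed


definition attach :: "nat \<Rightarrow> nat set set \<times> (nat \<Rightarrow> nat) \<Rightarrow> nat \<times> nat set \<Rightarrow> nat set set \<times> (nat \<Rightarrow> nat)" where
  "attach L \<tau> t = (fst \<tau> \<union> {{fst t, w} | w. w \<in> snd t}, (snd \<tau>)(fst t := L))"

definition triples :: "nat \<Rightarrow> nat set set \<Rightarrow> (nat \<times> nat set) set" where
  "triples N E = {(v,S). v \<in> verts N \<and> deg E v \<le> 1 \<and> S \<subseteq> desig N E - comp N E v \<and> card S = 2}"

lemma mem_LF: "(E, lab) \<in> labeled_forests m N \<longleftrightarrow> binary_forest N m E \<and>
      bij_betw lab (internal N E) {1..(N - m) div 2} \<and> (\<forall>v. v \<notin> internal N E \<longrightarrow> lab v = 0)"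
  unfolding labeled_forests_def by simp

lemma bij_ins: "bij_betw f A B \<Longrightarrow> x \<notin> A \<Longrightarrow> y \<notin> B \<Longrightarrow> bij_betw (f(x:=y)) (insert x A) (insert y B)"
proof -
  assume b: "bij_betw f A B" and x: "x \<notin> A" and y: "y \<notin> B"
  have "bij_betw (f(x:=y)) A B = bij_betw f A B" using x by (intro bij_betw_cong) auto
  then have "bij_betw (f(x:=y)) A B" using b by simp
  moreover have "bij_betw (f(x:=y)) {x} {y}" by simp
  ultimately have "bij_betw (f(x:=y)) (A \<union> {x}) (B \<union> {y})" using y by (intro bij_betw_combine) auto
  then show ?thesis by simp
qed

lemma top_vertex_eq:
  assumes b: "bij_betw lab I {1..L}" and v: "v \<in> I" and lv: "lab v = L" and that: "I = internal N E"
  shows "top_vertex N E lab = v"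
proof -
  have "(THE x. x \<in> I \<and> (\<forall>u \<in> I. lab u \<le> lab x)) = v"
  proof (rule the_equality)
    show "v \<in> I \<and> (\<forall>u\<in>I. lab u \<le> lab v)" using v lv b by (auto simp: bij_betw_def)
    fix x assume x: "x \<in> I \<and> (\<forall>u\<in>I. lab u \<le> lab x)"
    then have "lab x \<ge> L" "lab x \<le> L" using v lv b by (auto simp: bij_betw_def)
    then have "lab x = lab v" using lv by simp
    then show "x = v" using b x v by (auto simp: bij_betw_def inj_on_def)
  qed
  then show ?thesis unfolding top_vertex_def using that by simp
qed

lemma internal_E2:
  assumes gA: "glueA N E v a b"
  shows "internal N (glue.E2 E v a b) = insert v (internal N E)" and "v \<notin> internal N E"
proof -
  interpret glueA N E v a b by (rule gA)
  have da': "deg E a = 0 \<or> deg E a = 2" "deg E b = 0 \<or> deg E b = 2" using da db unfolding desig_def by auto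
  show "v \<notin> internal N E" using dv unfolding internal_def by auto
  show "internal N E2 = insert v (internal N E)"
  proof (rule set_eqI)
    fix x
    show "x \<in> internal N E2 \<longleftrightarrow> x \<in> insert v (internal N E)"
    proof (cases "x = v \<or> x = a \<or> x = b")
      case True
      then show ?thesis using deg2_v deg2_a deg2_b da' v a b unfolding internal_def by auto
    next
      case False
      then show ?thesis using deg2_other[of x] unfolding internal_def by auto
    qed
  qed
qed

lemma attach_ok:
  assumes N: "N = 2 * n + 1" and k: "1 \<le> k" "k \<le> n"
    and t: "(E, lab) \<in> labeled_forests (2 * k + 1) N" and tr: "(v, S) \<in> triples N E"
  shows "attach (n - k + 1) (E, lab) (v, S) \<in> labeled_forests (2 * k - 1) N \<and>
         R_map N (attach (n - k + 1) (E, lab) (v, S)) = (E, lab)"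
proof -
  have bfo: "binary_forest N (2*k+1) E" and bij: "bij_betw lab (internal N E) {1..(N - (2*k+1)) div 2}"
    and z: "\<forall>v. v \<notin> internal N E \<longrightarrow> lab v = 0" using t mem_LF by auto
  have bf: "bforest N E" and cE: "card (components N E) = 2*k+1" using bfo binary_forest_iff by auto
  have g: "is_graph N E" using bf by (rule bforest_graph)
  have d1: "(N - (2*k+1)) div 2 = n - k" using N k by simp
  have d0: "(N - (2*k-1)) div 2 = n - k + 1" using N k by simp
  have v: "v \<in> verts N" and dv: "deg E v \<le> 1" and Ssub: "S \<subseteq> desig N E - comp N E v" and cS: "card S = 2"
    using tr unfolding triples_def by auto
  obtain a b where S: "S = {a,b}" "a \<noteq> b" using cS unfolding card_2_iff by blast
  have da: "a \<in> desig N E" and db: "b \<in> desig N E" and av: "a \<notin> comp N E v" and bv: "b \<notin> comp N E v"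
    using Ssub S by auto
  have aV: "a \<in> verts N" and bV: "b \<in> verts N" using da db unfolding desig_def by auto
  have ba: "b \<notin> comp N E a"
  proof
    assume bca: "b \<in> comp N E a"
    obtain z where zz: "\<And>y. y \<in> comp N E a \<and> y \<in> desig N E \<Longrightarrow> y = z"
      using desig_unique[OF bf comp_in_components[OF aV]] by (elim ex1E) blast
    have "a = z" using zz comp_self[OF aV] da by blast
    moreover have "b = z" using zz bca db by blast
    ultimately show False using S(2) by simp
  qed
  have gA: "glueA N E v a b" using g v aV bV av bv ba bf dv da db by (unfold_locales) auto
  interpret glueA N E v a b by (rule gA)
  have E2eq: "fst (attach (n - k + 1) (E, lab) (v, S)) = E2" unfolding attach_def using E2_eq S by simp
  have labeq: "snd (attach (n - k + 1) (E, lab) (v, S)) = lab(v := n - k + 1)" unfolding attach_def by simp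
  have att: "attach (n - k + 1) (E, lab) (v, S) = (E2, lab(v := n - k + 1))"
    using E2eq labeq by (metis prod.collapse)
  have int2: "internal N E2 = insert v (internal N E)" and vni: "v \<notin> internal N E"
    using internal_E2[OF gA] by auto
  have bij2: "bij_betw (lab(v := n - k + 1)) (internal N E2) {1..n - k + 1}"
  proof -
    have b1: "bij_betw lab (internal N E) {1..n - k}" using bij d1 by simp
    have "bij_betw (lab(v := n - k + 1)) (insert v (internal N E)) (insert (n - k + 1) {1..n - k})"
      by (rule bij_ins[OF b1 vni]) simp
    moreover have "insert (n - k + 1) {1..n - k} = {1..n - k + 1}" by auto
    ultimately show ?thesis using int2 by simp
  qed
  have z2: "\<forall>x. x \<notin> internal N E2 \<longrightarrow> (lab(v := n - k + 1)) x = 0" using z int2 by auto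
  have bfo2: "binary_forest N (2*k-1) E2" using bf2 card_components2 cE binary_forest_iff by auto
  have mem: "(E2, lab(v := n - k + 1)) \<in> labeled_forests (2 * k - 1) N"
    using bfo2 bij2 z2 d0 mem_LF by simp
  have top: "top_vertex N E2 (lab(v := n - k + 1)) = v"
    by (rule top_vertex_eq[OF bij2]) (auto simp: int2)
  have "R_map N (E2, lab(v := n - k + 1)) = (E2 - {{v,w} | w. w \<in> children N E2 v}, lab(v := 0))"
    unfolding R_map_def Let_def using top by simp
  also have "\<dots> = (E, lab)" using children2 E2_minus z vni by auto
  finally show ?thesis using mem att by simp
qed


lemma decomp_ok:
  assumes N: "N = 2 * n + 1" and k: "1 \<le> k" "k \<le> n"
    and t: "(E', lab') \<in> labeled_forests (2 * k - 1) N"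
  shows "\<exists>E lab v S. (E, lab) \<in> labeled_forests (2 * k + 1) N \<and> (v, S) \<in> triples N E \<and>
           (E', lab') = attach (n - k + 1) (E, lab) (v, S)"
proof -
  have bfo: "binary_forest N (2*k-1) E'" and bij: "bij_betw lab' (internal N E') {1..(N - (2*k-1)) div 2}"
    and z: "\<forall>v. v \<notin> internal N E' \<longrightarrow> lab' v = 0" using t mem_LF by auto
  have bf': "bforest N E'" and cE: "card (components N E') = 2*k-1" using bfo binary_forest_iff by auto
  have d1: "(N - (2*k+1)) div 2 = n - k" using N k by simp
  have d0: "(N - (2*k-1)) div 2 = n - k + 1" using N k by simp
  have bij': "bij_betw lab' (internal N E') {1..n - k + 1}" using bij d0 by simp
  have "n - k + 1 \<in> lab' ` internal N E'" using bij' unfolding bij_betw_def by auto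
  then obtain v where vI: "v \<in> internal N E'" and lv0: "n - k + 1 = lab' v" by (rule imageE)
  have lv: "lab' v = n - k + 1" using lv0 by simp
  have v: "v \<in> verts N" and int: "1 < deg E' v" using vI unfolding internal_def by auto
  obtain a b where ab: "a \<noteq> b" "children N E' v = {a,b}" and gA: "glueA N (E' - {{v,a},{v,b}}) v a b"
      and ins: "insert {v,a} (insert {v,b} (E' - {{v,a},{v,b}})) = E'"
      and cc: "card (components N (E' - {{v,a},{v,b}})) = card (components N E') + 2"
    using decompose[OF bf' v int] by blast
  define E where "E = E' - {{v,a},{v,b}}"
  interpret glueA N E v a b using gA unfolding E_def .
  have E2: "E2 = E'" using ins unfolding E_def by simp
  have int2: "internal N E' = insert v (internal N E)" and vni: "v \<notin> internal N E"
    using internal_E2[OF gA[folded E_def]] E2 by auto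
  define lab where "lab = lab'(v := 0)"
  have bfo1: "binary_forest N (2*k+1) E" using bf cc cE k unfolding E_def binary_forest_iff by auto
  have bij1: "bij_betw lab (internal N E) {1..n - k}"
  proof -
    have "bij_betw lab' (internal N E' - {v}) ({1..n - k + 1} - {n - k + 1})"
      by (rule bij_betw_DiffI[OF bij']) (use vI lv in \<open>auto simp: bij_betw_def\<close>)
    moreover have "internal N E' - {v} = internal N E" using int2 vni by auto
    moreover have "{1..n - k + 1} - {n - k + 1} = {1..n - k}" by auto
    ultimately have "bij_betw lab' (internal N E) {1..n - k}" by simp
    moreover have "bij_betw lab (internal N E) {1..n - k} = bij_betw lab' (internal N E) {1..n - k}"
      unfolding lab_def using vni by (intro bij_betw_cong) auto
    ultimately show ?thesis by simp
  qed
  have z1: "\<forall>x. x \<notin> internal N E \<longrightarrow> lab x = 0" using z int2 unfolding lab_def by auto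
  have mem: "(E, lab) \<in> labeled_forests (2 * k + 1) N" using bfo1 bij1 z1 d1 mem_LF by simp
  have tr: "(v, {a,b}) \<in> triples N E" unfolding triples_def using v dv da db notin ab(1) by auto
  have "attach (n - k + 1) (E, lab) (v, {a,b}) = (E2, lab(v := n - k + 1))"
    unfolding attach_def using E2_eq by simp
  also have "\<dots> = (E', lab')" using E2 lv unfolding lab_def by auto
  finally show ?thesis using mem tr by metis
qed

lemma attach_inj:
  assumes t: "(E, lab) \<in> labeled_forests m N" and L: "L \<noteq> 0"
  shows "inj_on (attach L (E, lab)) (triples N E)"
proof (rule inj_onI)
  fix x y assume x: "x \<in> triples N E" and y: "y \<in> triples N E" and e: "attach L (E, lab) x = attach L (E, lab) y"
  obtain v S where xv: "x = (v,S)" by (cases x)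
  obtain v' S' where yv: "y = (v',S')" by (cases y)
  have z: "\<forall>v. v \<notin> internal N E \<longrightarrow> lab v = 0" and g: "is_graph N E"
    using t mem_LF binary_forest_iff bforest_graph by blast+
  have x1: "v \<in> verts N" "deg E v \<le> 1" "S \<subseteq> desig N E - comp N E v" using x xv unfolding triples_def by auto
  have y1: "v' \<in> verts N" "deg E v' \<le> 1" "S' \<subseteq> desig N E - comp N E v'" using y yv unfolding triples_def by auto
  have l: "lab(v := L) = lab(v' := L)" using e xv yv unfolding attach_def by simp
  have vv: "v = v'"
  proof (rule ccontr)
    assume ne: "v \<noteq> v'"
    have "lab v = 0" using z x1(2) unfolding internal_def by auto
    moreover have "(lab(v' := L)) v = L" using l fun_upd_same[of lab v L] by metis
    ultimately show False using ne L by simp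
  qed
  have ee: "E \<union> {{v,w} | w. w \<in> S} = E \<union> {{v,w} | w. w \<in> S'}" using e xv yv vv unfolding attach_def by simp
  have ni: "\<And>w T. T \<subseteq> desig N E - comp N E v \<Longrightarrow> w \<in> T \<Longrightarrow> {v,w} \<notin> E \<and> w \<noteq> v"
  proof -
    fix w T assume T: "T \<subseteq> desig N E - comp N E v" "w \<in> T"
    then have w: "w \<notin> comp N E v" by blast
    show "{v,w} \<notin> E \<and> w \<noteq> v" using edge_in_comp[OF g, of v w] w comp_self[OF x1(1)] by auto
  qed
  have sub: "\<And>T T'. T \<subseteq> desig N E - comp N E v \<Longrightarrow> E \<union> {{v,w} | w. w \<in> T} = E \<union> {{v,w} | w. w \<in> T'} \<Longrightarrow> T \<subseteq> T'"
  proof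
    fix T T' w assume T: "T \<subseteq> desig N E - comp N E v" and eq: "E \<union> {{v,w} | w. w \<in> T} = E \<union> {{v,w} | w. w \<in> T'}" and w: "w \<in> T"
    have "{v,w} \<in> E \<union> {{v,w} | w. w \<in> T'}" using eq w by blast
    then obtain w' where "w' \<in> T'" "{v,w} = {v,w'}" using ni[OF T w] by blast
    then show "w \<in> T'" using ni[OF T w] by (auto simp: doubleton_eq_iff)
  qed
  have "S \<subseteq> S'" using sub[OF x1(3) ee] .
  moreover have "S' \<subseteq> S" using sub[OF _ ee[symmetric]] y1(3) vv by simp
  ultimately show "x = y" using xv yv vv by simp
qed

lemma count_triples:
  assumes N: "N = 2 * n + 1" and k: "1 \<le> k" "k \<le> n"
    and t: "(E, lab) \<in> labeled_forests (2 * k + 1) N"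
  shows "card (triples N E) = (n + k + 1) * k * (2 * k - 1)"
proof -
  have bfo: "binary_forest N (2*k+1) E" and bij: "bij_betw lab (internal N E) {1..(N - (2*k+1)) div 2}"
    using t mem_LF by auto
  have bf: "bforest N E" and cE: "card (components N E) = 2*k+1" using bfo binary_forest_iff by auto
  have g: "is_graph N E" using bf by (rule bforest_graph)
  have d1: "(N - (2*k+1)) div 2 = n - k" using N k by simp
  have cI: "card (internal N E) = n - k" using bij_betw_same_card[OF bij] d1 by simp
  define Lv where "Lv = {v \<in> verts N. deg E v \<le> 1}"
  have Lv: "Lv = verts N - internal N E" unfolding Lv_def internal_def by auto
  have IV: "internal N E \<subseteq> verts N" unfolding internal_def by auto
  have cL: "card Lv = n + k + 1"
    using Lv card_Diff_subset[OF finite_subset[OF IV verts_finite] IV] cI N k by (simp add: verts_def)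
  have cD: "card (desig N E) = 2*k+1" using card_desig[OF bf] cE by simp
  have fD: "finite (desig N E)" unfolding desig_def by simp
  have each: "card {S. S \<subseteq> desig N E - comp N E v \<and> card S = 2} = k * (2*k - 1)" if v: "v \<in> Lv" for v
  proof -
    have vV: "v \<in> verts N" using v unfolding Lv_def by auto
    obtain r where r: "r \<in> comp N E v" "r \<in> desig N E" and ru: "\<And>y. y \<in> comp N E v \<and> y \<in> desig N E \<Longrightarrow> y = r"
      using desig_unique[OF bf comp_in_components[OF vV]] by (elim ex1E) blast
    have "desig N E \<inter> comp N E v = {r}" using r ru by blast
    moreover have "card (desig N E - comp N E v) = card (desig N E) - card (desig N E \<inter> comp N E v)"
      by (rule card_Diff_subset_Int) (use fD in simp)
    ultimately have "card (desig N E - comp N E v) = 2*k" using cD by simp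
    then have "card {S. S \<subseteq> desig N E - comp N E v \<and> card S = 2} = (2*k) choose 2"
      using n_subsets[of "desig N E - comp N E v" 2] fD by simp
    also have "\<dots> = k * (2*k - 1)" unfolding choose_two by (cases k) (auto simp: algebra_simps)
    finally show ?thesis .
  qed
  have eq: "triples N E = Sigma Lv (\<lambda>v. {S. S \<subseteq> desig N E - comp N E v \<and> card S = 2})"
    unfolding triples_def Lv_def by auto
  have fL: "finite Lv" unfolding Lv_def by simp
  have fin: "\<forall>v\<in>Lv. finite {S. S \<subseteq> desig N E - comp N E v \<and> card S = 2}"
    using fD by auto
  have "card (triples N E) = (\<Sum>v\<in>Lv. card {S. S \<subseteq> desig N E - comp N E v \<and> card S = 2})"
    unfolding eq using card_SigmaI[OF fL fin] .
  also have "\<dots> = (\<Sum>v\<in>Lv. k * (2*k - 1))" using each by simp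
  also have "\<dots> = card Lv * (k * (2*k - 1))" by simp
  also have "\<dots> = (n + k + 1) * k * (2 * k - 1)" using cL by (simp only: mult.assoc)
  finally show ?thesis .
qed


theorem lemma4p2:
  fixes n k N :: nat
  assumes "N = 2 * n + 1" and "1 \<le> k" and "k \<le> n"
  shows "R_map N ` labeled_forests (2 * k - 1) N = labeled_forests (2 * k + 1) N \<and>
         (\<forall>\<tau> \<in> labeled_forests (2 * k + 1) N.
            card {\<tau>' \<in> labeled_forests (2 * k - 1) N. R_map N \<tau>' = \<tau>} = (n + k + 1) * k * (2 * k - 1))"
proof -
  note N = assms(1) and k = assms(2,3)
  let ?L = "n - k + 1"
  have fiber: "{\<tau>' \<in> labeled_forests (2 * k - 1) N. R_map N \<tau>' = (E, lab)} = attach ?L (E, lab) ` triples N E"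
    if t: "(E, lab) \<in> labeled_forests (2 * k + 1) N" for E lab
  proof
    show "attach ?L (E, lab) ` triples N E \<subseteq> {\<tau>' \<in> labeled_forests (2 * k - 1) N. R_map N \<tau>' = (E, lab)}"
    proof
      fix x assume "x \<in> attach ?L (E, lab) ` triples N E"
      then obtain v S where vS: "(v,S) \<in> triples N E" "x = attach ?L (E, lab) (v,S)" by auto
      then show "x \<in> {\<tau>' \<in> labeled_forests (2 * k - 1) N. R_map N \<tau>' = (E, lab)}"
        using attach_ok[OF N k t vS(1)] by simp
    qed
    show "{\<tau>' \<in> labeled_forests (2 * k - 1) N. R_map N \<tau>' = (E, lab)} \<subseteq> attach ?L (E, lab) ` triples N E"
    proof
      fix x assume x: "x \<in> {\<tau>' \<in> labeled_forests (2 * k - 1) N. R_map N \<tau>' = (E, lab)}"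
      obtain E' lab' where xe: "x = (E', lab')" by (cases x)
      obtain E0 lab0 v S where d: "(E0, lab0) \<in> labeled_forests (2 * k + 1) N" "(v, S) \<in> triples N E0"
          "(E', lab') = attach ?L (E0, lab0) (v, S)"
        using decomp_ok[OF N k] x xe by blast
      have "R_map N (E', lab') = (E0, lab0)" using attach_ok[OF N k d(1) d(2)] d(3) by simp
      then have "(E0, lab0) = (E, lab)" using x xe by simp
      then show "x \<in> attach ?L (E, lab) ` triples N E" using d xe by auto
    qed
  qed
  have cnt: "card {\<tau>' \<in> labeled_forests (2 * k - 1) N. R_map N \<tau>' = \<tau>} = (n + k + 1) * k * (2 * k - 1)"
    if t: "\<tau> \<in> labeled_forests (2 * k + 1) N" for \<tau>
  proof -
    obtain E lab where te: "\<tau> = (E, lab)" by (cases \<tau>)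
    have t': "(E, lab) \<in> labeled_forests (2 * k + 1) N" using t te by simp
    have "card (attach ?L (E, lab) ` triples N E) = card (triples N E)"
      using attach_inj[OF t'] by (intro card_image) simp
    then show ?thesis using fiber[OF t'] count_triples[OF N k t'] te by simp
  qed
  have img: "R_map N ` labeled_forests (2 * k - 1) N = labeled_forests (2 * k + 1) N"
  proof
    show "R_map N ` labeled_forests (2 * k - 1) N \<subseteq> labeled_forests (2 * k + 1) N"
    proof
      fix y assume "y \<in> R_map N ` labeled_forests (2 * k - 1) N"
      then obtain x where x: "x \<in> labeled_forests (2 * k - 1) N" "y = R_map N x" by blast
      obtain E' lab' where xe: "x = (E', lab')" by (cases x)
      obtain E0 lab0 v S where d: "(E0, lab0) \<in> labeled_forests (2 * k + 1) N" "(v, S) \<in> triples N E0"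
          "(E', lab') = attach ?L (E0, lab0) (v, S)"
        using decomp_ok[OF N k] x xe by blast
      have "R_map N (E', lab') = (E0, lab0)" using attach_ok[OF N k d(1) d(2)] d(3) by simp
      then show "y \<in> labeled_forests (2 * k + 1) N" using x xe d(1) by simp
    qed
    show "labeled_forests (2 * k + 1) N \<subseteq> R_map N ` labeled_forests (2 * k - 1) N"
    proof
      fix y assume y: "y \<in> labeled_forests (2 * k + 1) N"
      obtain E lab where ye: "y = (E, lab)" by (cases y)
      have t': "(E, lab) \<in> labeled_forests (2 * k + 1) N" using y ye by simp
      have "card (triples N E) > 0" using count_triples[OF N k t'] k by simp
      then obtain tt where tt: "tt \<in> triples N E" by (metis card.empty ex_in_conv less_irrefl)
      obtain v S where vS: "tt = (v, S)" by (cases tt)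
      have "attach ?L (E, lab) (v, S) \<in> labeled_forests (2 * k - 1) N \<and> R_map N (attach ?L (E, lab) (v, S)) = (E, lab)"
        using attach_ok[OF N k t'] tt vS by simp
      then show "y \<in> R_map N ` labeled_forests (2 * k - 1) N" using ye by (metis image_eqI)
    qed
  qed
  show ?thesis using img cnt by blast
qed


end
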